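(* Let $L=\partial_x+\sum_{i\ge1}u_{i+1}\partial_x^{-i}$ be a scalar pseudo-differential operator in $\partial_x$ satisfying $L^*=-\partial_xL\partial_x^{-1}$. Then there exists $W=1+\sum_{j\ge1}w_j\partial_x^{-j}$ such that $L=W\partial_xW^{-1}$ and $W\partial_x^{-1}W^*=\partial_x^{-1}$.
   Context: Coefficients $u_i,w_j$ are functions of $x$ (possibly depending on further parameters), $\partial_x=\partial/\partial x$, pseudo-differential operators compose by the generalized Leibniz rule, and $(\sum_ib_i\partial_x^i)^*=\sum_i(-\partial_x)^ib_i$. Indefinite integration $\partial_x^{-1}$ of functions is allowed (the $w_j$ are obtained by integration in $x$). *)

theory Defs
  imports "HOL-Analysis.Analysis"
begin

text \<open>An operator \<open>\<Sum>\<^sub>i P i \<partial>\<^sub>x\<^sup>i\<close> (i ranging over the integers, only finitely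
many nonzero coefficients with positive index, i.e. the support is bounded above)
is represented by its coefficient map \<open>P :: int \<Rightarrow> real \<Rightarrow> real\<close>.\<close>

type_synonym psdo = "int \<Rightarrow> real \<Rightarrow> real"

definition smooth :: "(real \<Rightarrow> real) \<Rightarrow> bool" where
  "smooth f \<longleftrightarrow> (\<forall>k x. ((deriv ^^ k) f) differentiable (at x))"

definition is_psdo :: "psdo \<Rightarrow> bool" where
  "is_psdo P \<longleftrightarrow> (\<exists>N. \<forall>i>N. P i = (\<lambda>_. 0)) \<and> (\<forall>i. smooth (P i))"

definition dpow :: "int \<Rightarrow> psdo" where
  "dpow m = (\<lambda>i. if i = m then (\<lambda>_. 1) else (\<lambda>_. 0))"

text \<open>Composition by the generalized Leibniz rule
  \<open>(a \<partial>\<^sup>i)(b \<partial>\<^sup>j) = \<Sum>\<^sub>k\<^sub>\<ge>\<^sub>0 (i choose k) a b\<^sup>(\<^sup>k\<^sup>) \<partial>\<^sup>i\<^sup>+\<^sup>j\<^sup>-\<^sup>k\<close>;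
  for operators with support bounded above the index set is finite.\<close>
definition psdo_mult :: "psdo \<Rightarrow> psdo \<Rightarrow> psdo" where
  "psdo_mult P Q = (\<lambda>n x. \<Sum>(i, k) \<in> {(i, k). P i \<noteq> (\<lambda>_. 0) \<and> Q (n + int k - i) \<noteq> (\<lambda>_. 0)}.
       (of_int i gchoose k) * P i x * (deriv ^^ k) (Q (n + int k - i)) x)"

text \<open>Formal adjoint \<open>(\<Sum>\<^sub>i b\<^sub>i \<partial>\<^sup>i)\<^sup>* = \<Sum>\<^sub>i (-\<partial>)\<^sup>i b\<^sub>i\<close>, written out with the Leibniz rule:
  \<open>(-\<partial>)\<^sup>i b = (-1)\<^sup>i \<Sum>\<^sub>k (i choose k) b\<^sup>(\<^sup>k\<^sup>) \<partial>\<^sup>i\<^sup>-\<^sup>k\<close>.\<close>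
definition psdo_adj :: "psdo \<Rightarrow> psdo" where
  "psdo_adj P = (\<lambda>n x. \<Sum>k \<in> {k. P (n + int k) \<noteq> (\<lambda>_. 0)}.
       ((-1) powi (n + int k)) * (of_int (n + int k) gchoose k) * (deriv ^^ k) (P (n + int k)) x)"

definition lax_op :: "(nat \<Rightarrow> real \<Rightarrow> real) \<Rightarrow> psdo" where
  "lax_op u = (\<lambda>n. if n = 1 then (\<lambda>_. 1) else if n \<le> -1 then u (nat (1 - n)) else (\<lambda>_. 0))"

end

theory Submission
  imports Defs "HOL-Computational_Algebra.Formal_Power_Series" "HOL-Library.Groups_Big_Fun"
begin

lemma pascal_sum:
  fixes a b :: "nat \<Rightarrow> real"
  shows "(\<Sum>i\<le>k. of_nat (k choose i) * (a (Suc i) * b (k - i) + a i * b (Suc (k - i))))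
       = (\<Sum>i\<le>Suc k. of_nat (Suc k choose i) * (a i * b (Suc k - i)))"
proof -
  have "(\<Sum>i\<le>Suc k. of_nat (Suc k choose i) * (a i * b (Suc k - i)))
      = a 0 * b (Suc k) + (\<Sum>i\<le>k. of_nat (Suc k choose Suc i) * (a (Suc i) * b (k - i)))"
    by (subst sum.atMost_Suc_shift) simp
  also have "\<dots> = a 0 * b (Suc k) + (\<Sum>i\<le>k. of_nat (k choose i) * (a (Suc i) * b (k - i)))
         + (\<Sum>i\<le>k. of_nat (k choose Suc i) * (a (Suc i) * b (k - i)))"
    by (simp add: sum.distrib algebra_simps)
  also have "(\<Sum>i\<le>k. of_nat (k choose Suc i) * (a (Suc i) * b (k - i)))
      = (\<Sum>i\<le>Suc k. of_nat (k choose i) * (a i * b (Suc k - i))) - a 0 * b (Suc k)"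
  proof -
    have "(\<Sum>i\<le>Suc k. of_nat (k choose i) * (a i * b (Suc k - i)))
       = a 0 * b (Suc k) + (\<Sum>i\<le>k. of_nat (k choose Suc i) * (a (Suc i) * b (k - i)))"
      by (subst sum.atMost_Suc_shift) simp
    then show ?thesis by simp
  qed
  also have "(\<Sum>i\<le>Suc k. of_nat (k choose i) * (a i * b (Suc k - i)))
      = (\<Sum>i\<le>k. of_nat (k choose i) * (a i * b (Suc (k - i))))"
    by (simp add: Suc_diff_le)
  finally show ?thesis by (simp add: sum.distrib algebra_simps)
qed

lemma dk_Suc: "(deriv^^Suc k) f = deriv ((deriv^^k) f)" by simp
lemma dk_Suc': "(deriv^^Suc k) f = (deriv^^k) (deriv f)" by (simp add: funpow_Suc_right del: funpow.simps)
lemma dk_add: "(deriv^^(j+k)) f = (deriv^^j) ((deriv^^k) f)" by (simp add: funpow_add)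

lemma deriv_eqI: "(\<And>x. ((h::real\<Rightarrow>real) has_real_derivative h' x) (at x)) \<Longrightarrow> deriv h = h'"
  by (rule ext) (rule DERIV_imp_deriv)

lemma smooth_by_derivs:
  fixes g :: "nat \<Rightarrow> real \<Rightarrow> real"
  assumes "\<And>k x. (g k has_real_derivative g (Suc k) x) (at x)"
  shows "smooth (g 0)" "(deriv^^k) (g 0) = g k"
proof -
  have e: "(deriv^^k) (g 0) = g k" for k
    by (induction k) (auto intro!: deriv_eqI assms)
  then show "(deriv^^k) (g 0) = g k" .
  show "smooth (g 0)" unfolding smooth_def e
    using assms real_differentiable_def by blast
qed

lemma smooth_DERIV: "smooth f \<Longrightarrow> (((deriv^^k) f) has_real_derivative (deriv^^Suc k) f x) (at x)"
  unfolding smooth_def by (simp add: DERIV_deriv_iff_real_differentiable)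

lemma smooth_DERIV': "smooth f \<Longrightarrow> (((deriv^^k) f) has_real_derivative deriv ((deriv^^k) f) x) (at x)"
  using smooth_DERIV by simp

lemma smooth_dk: "smooth f \<Longrightarrow> smooth ((deriv^^k) f)"
  unfolding smooth_def by (metis dk_add)

lemma smooth_deriv: "smooth f \<Longrightarrow> smooth (deriv f)"
  using smooth_dk[of f 1] by simp

lemma dk_zero[simp]: "(deriv^^k) (\<lambda>_. 0::real) = (\<lambda>_. 0)"
  by (induction k) (auto intro!: deriv_eqI)

lemma dk_const[simp]: "(deriv^^Suc k) (\<lambda>_. c::real) = (\<lambda>_. 0)"
proof -
  have "deriv (\<lambda>_. c::real) = (\<lambda>_. 0)" by (auto intro!: deriv_eqI)
  then show ?thesis by (simp only: dk_Suc' dk_zero)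
qed

lemma smooth_const[simp]: "smooth (\<lambda>_. c)"
  using smooth_by_derivs(1)[of "\<lambda>k. if k = 0 then (\<lambda>_. c) else (\<lambda>_. 0)"] by auto

lemma smooth_add:
  assumes "smooth f" "smooth g"
  shows "smooth (\<lambda>x. f x + g x)" "(deriv^^k) (\<lambda>x. f x + g x) = (\<lambda>x. (deriv^^k) f x + (deriv^^k) g x)"
proof -
  let ?G = "\<lambda>k x. (deriv^^k) f x + (deriv^^k) g x"
  have d: "(?G k has_real_derivative ?G (Suc k) x) (at x)" for k x
    using smooth_DERIV[OF assms(1)] smooth_DERIV[OF assms(2)] by (auto intro!: derivative_intros)
  have "?G 0 = (\<lambda>x. f x + g x)" by simp
  then show "smooth (\<lambda>x. f x + g x)" "(deriv^^k) (\<lambda>x. f x + g x) = ?G k"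
    using smooth_by_derivs[of ?G, OF d] by auto
qed

lemma smooth_cmult:
  assumes "smooth f"
  shows "smooth (\<lambda>x. c * f x)" "(deriv^^k) (\<lambda>x. c * f x) = (\<lambda>x. c * (deriv^^k) f x)"
proof -
  let ?G = "\<lambda>k x. c * (deriv^^k) f x"
  have d: "(?G k has_real_derivative ?G (Suc k) x) (at x)" for k x
    using smooth_DERIV'[OF assms(1)] by (auto intro!: DERIV_cmult)
  have "?G 0 = (\<lambda>x. c * f x)" by simp
  then show "smooth (\<lambda>x. c * f x)" "(deriv^^k) (\<lambda>x. c * f x) = ?G k"
    using smooth_by_derivs[of ?G, OF d] by auto
qed

lemma smooth_minus:
  assumes "smooth f"
  shows "smooth (\<lambda>x. - f x)" "(deriv^^k) (\<lambda>x. - f x) = (\<lambda>x. - (deriv^^k) f x)"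
  using smooth_cmult[OF assms, where c="-1"] by auto

lemma smooth_sum:
  assumes "\<And>i. i \<in> S \<Longrightarrow> smooth (F i)"
  shows "smooth (\<lambda>x. \<Sum>i\<in>S. F i x)" "(deriv^^k) (\<lambda>x. \<Sum>i\<in>S. F i x) = (\<lambda>x. \<Sum>i\<in>S. (deriv^^k) (F i) x)"
proof -
  let ?G = "\<lambda>k x. \<Sum>i\<in>S. (deriv^^k) (F i) x"
  have d: "(?G k has_real_derivative ?G (Suc k) x) (at x)" for k x
    using smooth_DERIV[OF assms] by (auto intro!: derivative_intros)
  have "?G 0 = (\<lambda>x. \<Sum>i\<in>S. F i x)" by simp
  then show "smooth (\<lambda>x. \<Sum>i\<in>S. F i x)" "(deriv^^k) (\<lambda>x. \<Sum>i\<in>S. F i x) = ?G k"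
    using smooth_by_derivs[of ?G, OF d] by auto
qed

lemma smooth_mult:
  assumes f: "smooth f" and g: "smooth g"
  shows "smooth (\<lambda>x. f x * g x)"
    "(deriv^^k) (\<lambda>x. f x * g x) = (\<lambda>x. \<Sum>i\<le>k. of_nat (k choose i) * ((deriv^^i) f x * (deriv^^(k-i)) g x))"
proof -
  let ?G = "\<lambda>k x. \<Sum>i\<le>k. of_nat (k choose i) * ((deriv^^i) f x * (deriv^^(k-i)) g x)"
  have d: "(?G k has_real_derivative ?G (Suc k) x) (at x)" for k x
  proof -
    have "(?G k has_real_derivative (\<Sum>i\<le>k. of_nat (k choose i) * ((deriv^^Suc i) f x * (deriv^^(k-i)) g x
             + (deriv^^i) f x * (deriv^^Suc (k-i)) g x))) (at x)"
      using smooth_DERIV'[OF f] smooth_DERIV'[OF g]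
      by (intro derivative_eq_intros) (auto simp: algebra_simps)
    also have "(\<Sum>i\<le>k. of_nat (k choose i) * ((deriv^^Suc i) f x * (deriv^^(k-i)) g x
             + (deriv^^i) f x * (deriv^^Suc (k-i)) g x)) = ?G (Suc k) x"
      using pascal_sum[of k "\<lambda>i. (deriv^^i) f x" "\<lambda>i. (deriv^^i) g x"] by simp
    finally show ?thesis .
  qed
  have "?G 0 = (\<lambda>x. f x * g x)" by simp
  then show "smooth (\<lambda>x. f x * g x)" "(deriv^^k) (\<lambda>x. f x * g x) = ?G k"
    using smooth_by_derivs[of ?G, OF d] by auto
qed

lemma smooth_isCont: "smooth f \<Longrightarrow> isCont f x"
  unfolding smooth_def using differentiable_imp_continuous_within[of f x UNIV]
  by (metis funpow_0)

lemma antideriv_exists: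
  assumes "\<And>x. isCont (f::real\<Rightarrow>real) x"
  shows "\<exists>F. \<forall>x. (F has_real_derivative f x) (at x)"
proof -
  have "-\<infinity> < (\<infinity>::ereal)" by simp
  from einterval_antiderivative[OF this, of f] assms
  obtain F where "\<forall>x::real. (F has_vector_derivative f x) (at x)" by auto
  then show ?thesis by (auto simp: has_real_derivative_iff_has_vector_derivative)
qed

definition prim :: "(real \<Rightarrow> real) \<Rightarrow> real \<Rightarrow> real" where
  "prim f = (SOME F. \<forall>x. (F has_real_derivative f x) (at x))"

lemma prim:
  assumes "smooth f"
  shows "deriv (prim f) = f" "smooth (prim f)"
proof -
  have "\<exists>F. \<forall>x. (F has_real_derivative f x) (at x)"
    using antideriv_exists smooth_isCont[OF assms] by blast
  then have d: "\<forall>x. (prim f has_real_derivative f x) (at x)"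
    unfolding prim_def by (rule someI_ex)
  then show e: "deriv (prim f) = f" by (intro deriv_eqI) auto
  show "smooth (prim f)" unfolding smooth_def
  proof (intro allI)
    fix k x show "(deriv ^^ k) (prim f) differentiable at x"
    proof (cases k)
      case 0 then show ?thesis using d real_differentiable_def by auto
    next
      case (Suc j) then show ?thesis using assms e unfolding smooth_def by (simp only: dk_Suc')
    qed
  qed
qed

lemma deriv_zero_const:
  assumes "smooth f" "deriv f = (\<lambda>_. 0)"
  shows "f = (\<lambda>_. f 0)"
proof -
  have "\<forall>x. DERIV f x :> 0" using smooth_DERIV'[OF assms(1), of 0] assms(2) by simp
  then show ?thesis using DERIV_isconst_all by blast
qed


definition ordle :: "psdo \<Rightarrow> int \<Rightarrow> bool" where "ordle P N \<longleftrightarrow> (\<forall>i>N. P i = (\<lambda>_. 0))"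
definition sm :: "psdo \<Rightarrow> bool" where "sm P \<longleftrightarrow> (\<forall>i. smooth (P i))"

lemma is_psdo_iff: "is_psdo P \<longleftrightarrow> (\<exists>N. ordle P N) \<and> sm P"
  unfolding is_psdo_def ordle_def sm_def by auto

lemma ordle_mono: "ordle P N \<Longrightarrow> N \<le> M \<Longrightarrow> ordle P M"
  unfolding ordle_def by auto

lemma ordle_zero: "ordle P N \<Longrightarrow> i > N \<Longrightarrow> P i x = 0"
  unfolding ordle_def by simp

lemma ordle_nz: "ordle P N \<Longrightarrow> P i \<noteq> (\<lambda>_. 0) \<Longrightarrow> i \<le> N"
  unfolding ordle_def by (meson not_le)

lemma ordle_nz': "ordle P N \<Longrightarrow> P i x \<noteq> 0 \<Longrightarrow> i \<le> N"
  unfolding ordle_def by (metis not_le)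

lemma dk_nz: "(deriv^^k) f x \<noteq> (0::real) \<Longrightarrow> f \<noteq> (\<lambda>_. 0)"
  by auto

lemma ordle_dnz: "ordle P N \<Longrightarrow> (deriv^^k) (P i) x \<noteq> 0 \<Longrightarrow> i \<le> N"
  using ordle_nz dk_nz by blast

abbreviation cc :: "int \<Rightarrow> nat \<Rightarrow> real" where "cc i k \<equiv> (of_int i gchoose k)"

lemma Sum_any_eq_sum: "finite A \<Longrightarrow> (\<And>a. a \<notin> A \<Longrightarrow> g a = 0) \<Longrightarrow> Sum_any g = sum g A"
  by (rule Sum_any.expand_superset) auto

lemma fin_supp: "finite A \<Longrightarrow> (\<And>a. g a \<noteq> 0 \<Longrightarrow> a \<in> A) \<Longrightarrow> finite {a. g a \<noteq> 0}"
  by (rule finite_subset[of _ A]) auto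

definition mt :: "psdo \<Rightarrow> psdo \<Rightarrow> int \<Rightarrow> real \<Rightarrow> int \<times> nat \<Rightarrow> real" where
  "mt P Q n x = (\<lambda>(i,k). cc i k * (P i x * (deriv^^k) (Q (n + int k - i)) x))"

definition mbox :: "int \<Rightarrow> int \<Rightarrow> int \<Rightarrow> (int \<times> nat) set" where
  "mbox NP NQ n = {n-NQ..NP} \<times> {..nat(NP+NQ-n)}"

lemma mbox_finite[simp]: "finite (mbox NP NQ n)" unfolding mbox_def by simp

lemma mt_zero:
  assumes "ordle P NP" "ordle Q NQ" "a \<notin> mbox NP NQ n"
  shows "mt P Q n x a = 0"
proof (cases a)
  case (Pair i k)
  show ?thesis
  proof (rule ccontr)
    assume "mt P Q n x a \<noteq> 0"
    then have "P i x \<noteq> 0" "(deriv^^k) (Q (n + int k - i)) x \<noteq> 0" using Pair by (auto simp: mt_def)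
    then have "i \<le> NP" "n + int k - i \<le> NQ" using assms ordle_nz' ordle_dnz by blast+
    then have "a \<in> mbox NP NQ n" using Pair by (auto simp: mbox_def)
    then show False using assms by simp
  qed
qed

lemma mult_sum:
  assumes "ordle P NP" "ordle Q NQ" "finite A" "mbox NP NQ n \<subseteq> A"
  shows "psdo_mult P Q n x = sum (mt P Q n x) A"
proof -
  let ?S = "{(i, k). P i \<noteq> (\<lambda>_. 0) \<and> Q (n + int k - i) \<noteq> (\<lambda>_. 0)}"
  have S: "?S \<subseteq> A"
  proof
    fix a assume "a \<in> ?S"
    then obtain i k where a: "a = (i,k)" "P i \<noteq> (\<lambda>_. 0)" "Q (n + int k - i) \<noteq> (\<lambda>_. 0)" by auto
    then have "i \<le> NP" "n + int k - i \<le> NQ" using assms ordle_nz by blast+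
    then show "a \<in> A" using a assms(4) by (auto simp: mbox_def)
  qed
  have "psdo_mult P Q n x = sum (mt P Q n x) ?S"
    unfolding psdo_mult_def mt_def by (intro sum.cong) (auto simp: algebra_simps)
  also have "\<dots> = sum (mt P Q n x) A"
    using S assms(3) by (intro sum.mono_neutral_left) (auto simp: mt_def)
  finally show ?thesis .
qed

lemma mult_Sum_any:
  assumes "ordle P NP" "ordle Q NQ"
  shows "psdo_mult P Q n x = Sum_any (mt P Q n x)"
  using mult_sum[OF assms mbox_finite order_refl] Sum_any_eq_sum[OF mbox_finite mt_zero[OF assms]]
  by simp

lemma mt_fin:
  assumes "ordle P NP" "ordle Q NQ"
  shows "finite {a. mt P Q n x a \<noteq> 0}"
  using fin_supp[OF mbox_finite] mt_zero[OF assms] by blast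

lemma ordle_mult:
  assumes "ordle P NP" "ordle Q NQ"
  shows "ordle (psdo_mult P Q) (NP + NQ)"
  unfolding ordle_def
proof (intro allI impI ext)
  fix n x assume "n > NP + NQ"
  then have "mbox NP NQ n = {}" by (auto simp: mbox_def)
  then show "psdo_mult P Q n x = 0" using mult_sum[OF assms, of "{}"] by simp
qed

lemma mult_fun:
  assumes "ordle P NP" "ordle Q NQ"
  shows "psdo_mult P Q n = (\<lambda>x. \<Sum>a\<in>mbox NP NQ n. mt P Q n x a)"
  using mult_sum[OF assms mbox_finite order_refl] by auto

lemma smooth_mt:
  assumes "sm P" "sm Q"
  shows "smooth (\<lambda>x. mt P Q n x a)"
    "(deriv^^p) (\<lambda>x. mt P Q n x a) x = (case a of (j,m) \<Rightarrow> cc j m * (\<Sum>q\<le>p. of_nat (p choose q) *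
        ((deriv^^q) (P j) x * (deriv^^(p-q+m)) (Q (n + int m - j)) x)))"
proof -
  obtain j m where a: "a = (j,m)" by fastforce
  have s1: "smooth (P j)" "smooth ((deriv^^m) (Q (n + int m - j)))"
    using assms smooth_dk unfolding sm_def by auto
  have e: "(\<lambda>x. mt P Q n x a) = (\<lambda>x. cc j m * (P j x * (deriv^^m) (Q (n + int m - j)) x))"
    by (simp add: mt_def a)
  show "smooth (\<lambda>x. mt P Q n x a)" unfolding e
    by (intro smooth_cmult smooth_mult s1)
  show "(deriv^^p) (\<lambda>x. mt P Q n x a) x = (case a of (j,m) \<Rightarrow> cc j m * (\<Sum>q\<le>p. of_nat (p choose q) *
        ((deriv^^q) (P j) x * (deriv^^(p-q+m)) (Q (n + int m - j)) x)))"
    unfolding e by (simp add: a smooth_cmult(2)[OF smooth_mult(1)[OF s1]] smooth_mult(2)[OF s1] dk_add[symmetric])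
qed

lemma sm_mult:
  assumes "ordle P NP" "ordle Q NQ" "sm P" "sm Q"
  shows "sm (psdo_mult P Q)"
  unfolding sm_def mult_fun[OF assms(1,2)]
  by (intro allI smooth_sum smooth_mt[OF assms(3,4)])

lemma is_psdo_mult: "is_psdo P \<Longrightarrow> is_psdo Q \<Longrightarrow> is_psdo (psdo_mult P Q)"
  unfolding is_psdo_iff using ordle_mult sm_mult by blast

definition dmt :: "psdo \<Rightarrow> psdo \<Rightarrow> int \<Rightarrow> nat \<Rightarrow> real \<Rightarrow> int \<times> nat \<Rightarrow> real" where
  "dmt P Q n p x = (\<lambda>(j,m). cc j m * (\<Sum>q\<le>p. of_nat (p choose q) *
        ((deriv^^q) (P j) x * (deriv^^(p-q+m)) (Q (n + int m - j)) x)))"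

lemma deriv_mult:
  assumes "ordle P NP" "ordle Q NQ" "sm P" "sm Q"
  shows "(deriv^^p) (psdo_mult P Q n) x = Sum_any (dmt P Q n p x)"
proof -
  have "(deriv^^p) (psdo_mult P Q n) x = (\<Sum>a\<in>mbox NP NQ n. (deriv^^p) (\<lambda>x. mt P Q n x a) x)"
    unfolding mult_fun[OF assms(1,2)] smooth_sum(2)[OF smooth_mt(1)[OF assms(3,4)]] by simp
  also have "\<dots> = sum (dmt P Q n p x) (mbox NP NQ n)"
    unfolding smooth_mt(2)[OF assms(3,4)] dmt_def by simp
  also have "\<dots> = Sum_any (dmt P Q n p x)"
  proof (rule Sum_any_eq_sum[symmetric], simp)
    fix a assume a: "a \<notin> mbox NP NQ n"
    obtain j m where am: "a = (j,m)" by fastforce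
    show "dmt P Q n p x a = 0"
    proof (rule ccontr)
      assume "dmt P Q n p x a \<noteq> 0"
      then obtain q where "(deriv^^q) (P j) x \<noteq> 0" "(deriv^^(p-q+m)) (Q (n + int m - j)) x \<noteq> 0"
        unfolding dmt_def am by (auto elim!: sum.not_neutral_contains_not_neutral)
      then have "j \<le> NP" "n + int m - j \<le> NQ" using assms ordle_dnz by blast+
      then show False using a am by (auto simp: mbox_def)
    qed
  qed
  finally show ?thesis .
qed


lemma Sum_any_cart:
  assumes "finite A" "finite B" "\<And>a b. g a b \<noteq> 0 \<Longrightarrow> a \<in> A \<and> b \<in> B"
  shows "Sum_any (\<lambda>a. Sum_any (g a)) = Sum_any (\<lambda>(a,b). g a b)"
  by (rule Sum_any.cartesian_product[of "A \<times> B"]) (use assms in auto)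

lemma Sum_any_reindex:
  assumes "inj l" "\<And>a. g a \<noteq> 0 \<Longrightarrow> a \<in> range l"
  shows "Sum_any g = Sum_any (g \<circ> l)"
proof -
  have e: "{a. g a \<noteq> 0} = l ` {b. g (l b) \<noteq> 0}" using assms(2) by auto
  have "sum g (l ` {b. g (l b) \<noteq> 0}) = sum (g \<circ> l) {b. g (l b) \<noteq> 0}"
    by (rule sum.reindex) (use assms(1) inj_on_subset in blast)
  then show ?thesis unfolding Sum_any.expand_set e by simp
qed

lemma Sum_any_rdistrib:
  fixes c :: real shows "finite {a. g a \<noteq> 0} \<Longrightarrow> c * Sum_any g = Sum_any (\<lambda>a. c * g a)"
  by (rule Sum_any_right_distrib)

lemma dmt_fin:
  assumes "ordle P NP" "ordle Q NQ"
  shows "finite {a. dmt P Q n p x a \<noteq> 0}"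
proof (rule fin_supp[OF mbox_finite[of NP NQ n]])
  fix a assume a: "dmt P Q n p x a \<noteq> 0"
  obtain j m where am: "a = (j,m)" by fastforce
  obtain q where "(deriv^^q) (P j) x \<noteq> 0" "(deriv^^(p-q+m)) (Q (n + int m - j)) x \<noteq> 0"
    using a unfolding dmt_def am by (auto elim!: sum.not_neutral_contains_not_neutral)
  then have "j \<le> NP" "n + int m - j \<le> NQ" using assms ordle_dnz by blast+
  then show "a \<in> mbox NP NQ n" using am by (auto simp: mbox_def)
qed

lemma trip_nz:
  assumes "c * (P a x * ((deriv^^q) (Q j) x * (deriv^^r) (R s) x)) \<noteq> 0"
    "ordle P N" "ordle Q N" "ordle R N"
  shows "a \<le> N \<and> j \<le> N \<and> s \<le> N"
proof -
  have "(deriv^^0) (P a) x \<noteq> 0" "(deriv^^q) (Q j) x \<noteq> 0" "(deriv^^r) (R s) x \<noteq> 0" using assms(1) by auto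
  then show ?thesis using assms(2-4) ordle_dnz by blast
qed

lemma coef_identity:
  fixes a j :: int
  shows "cc (a + j - int q) r * cc a q
     = (\<Sum>t\<le>r. cc a (q+t) * cc j (r-t) * of_nat ((q+t) choose q))"
proof -
  have "cc a (q+t) * of_nat ((q+t) choose q) = cc a q * ((of_int a - of_nat q) gchoose t)" for t
    using gbinomial_trinomial_revision[of q "q+t" "of_int a :: real"] by (simp add: binomial_gbinomial)
  then have ee: "cc a (q+t) * cc j (r-t) * of_nat ((q+t) choose q) = cc a q * (((of_int a - of_nat q) gchoose t) * cc j (r-t))" for t
    by (metis mult.commute mult.left_commute)
  then have "(\<Sum>t\<le>r. cc a (q+t) * cc j (r-t) * of_nat ((q+t) choose q))
     = cc a q * (\<Sum>t\<le>r. ((of_int a - of_nat q) gchoose t) * cc j (r-t))"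
    unfolding sum_distrib_left by (simp only: ee)
  also have "(\<Sum>t\<le>r. ((of_int a - of_nat q) gchoose t) * cc j (r-t)) = ((of_int a - of_nat q + of_int j) gchoose r)"
    using gbinomial_Vandermonde[of "of_int a - of_nat q :: real" "of_int j" r] by (simp add: atLeast0AtMost)
  finally show ?thesis by (simp add: algebra_simps)
qed

lemma assoc_N:
  assumes P: "ordle P N" "sm P" and Q: "ordle Q N" "sm Q" and R: "ordle R N" "sm R" and N: "0 \<le> N"
  shows "psdo_mult (psdo_mult P Q) R n x = psdo_mult P (psdo_mult Q R) n x"
proof -
  define B where "B = 3*N + \<bar>n\<bar>"
  define I where "I = {-B..B}"
  define K where "K = {..nat B}"
  have fI: "finite I" "finite K" unfolding I_def K_def by auto
  have nb: "-\<bar>n\<bar> \<le> n" "n \<le> \<bar>n\<bar>" by auto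
  have inI: "i \<in> I" if "-B \<le> i" "i \<le> B" for i using that by (simp add: I_def)
  have inK: "k \<in> K" if "int k \<le> B" for k using that by (simp add: K_def nat_le_iff)
  define T where "T = (\<lambda>(a::int) (j::int) (q::nat) (r::nat). P a x * ((deriv^^q) (Q j) x * (deriv^^r) (R (n + int q + int r - a - j)) x))"
  define F1 where "F1 = (\<lambda>(i::int,k::nat) (a::int,m::nat). cc i k * cc a m * (P a x * ((deriv^^m) (Q (i + int m - a)) x * (deriv^^k) (R (n + int k - i)) x)))"
  have L1: "psdo_mult (psdo_mult P Q) R n x = Sum_any (\<lambda>ik. Sum_any (F1 ik))"
  proof -
    have "psdo_mult (psdo_mult P Q) R n x = Sum_any (mt (psdo_mult P Q) R n x)"
      by (rule mult_Sum_any[OF ordle_mult[OF P(1) Q(1)] R(1)])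
    also have "\<dots> = Sum_any (\<lambda>ik. Sum_any (F1 ik))"
    proof (rule Sum_any.cong)
      fix ik :: "int \<times> nat" obtain i k where ik: "ik = (i,k)" by fastforce
      have "mt (psdo_mult P Q) R n x ik = (cc i k * (deriv^^k) (R (n + int k - i)) x) * Sum_any (mt P Q i x)"
        by (simp add: mt_def ik mult_Sum_any[OF P(1) Q(1)] algebra_simps)
      also have "\<dots> = Sum_any (\<lambda>am. (cc i k * (deriv^^k) (R (n + int k - i)) x) * mt P Q i x am)"
        by (rule Sum_any_rdistrib[OF mt_fin[OF P(1) Q(1)]])
      also have "\<dots> = Sum_any (F1 ik)"
      proof (rule Sum_any.cong)
        fix am :: "int \<times> nat" show "cc i k * (deriv ^^ k) (R (n + int k - i)) x * mt P Q i x am = F1 ik am"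
          by (cases am) (simp add: mt_def F1_def ik algebra_simps)
      qed
      finally show "mt (psdo_mult P Q) R n x ik = Sum_any (F1 ik)" .
    qed
    finally show ?thesis .
  qed
  have L2: "Sum_any (\<lambda>ik. Sum_any (F1 ik)) = Sum_any (\<lambda>(ik,am). F1 ik am)"
  proof (rule Sum_any_cart[of "I \<times> K" "I \<times> K"])
    fix ik am assume nz: "F1 ik am \<noteq> 0"
    obtain i k a m where e: "ik = (i,k)" "am = (a,m)" by fastforce
    have "a \<le> N \<and> i + int m - a \<le> N \<and> n + int k - i \<le> N"
      by (rule trip_nz[where c="cc i k * cc a m" and x=x and q=m and r=k, OF _ P(1) Q(1) R(1)]) (use nz in \<open>simp add: F1_def e\<close>)
    then show "ik \<in> I \<times> K \<and> am \<in> I \<times> K" using N nb unfolding e B_def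
      by (auto intro!: inI inK simp: B_def)
  qed (use fI in auto)
  define l where "l = (\<lambda>(a::int,j::int,q::nat,r::nat). ((a + j - int q, r), (a, q)))"
  have L3: "Sum_any (\<lambda>(ik,am). F1 ik am) = Sum_any ((\<lambda>(ik,am). F1 ik am) \<circ> l)"
  proof (rule Sum_any_reindex)
    show "inj l" unfolding l_def by (auto intro!: injI)
    fix z :: "(int \<times> nat) \<times> int \<times> nat"
    obtain i k a m where z: "z = ((i,k),(a,m))" by (metis prod.collapse)
    have "z = l (a, i + int m - a, m, k)" by (simp add: z l_def)
    then show "z \<in> range l" by blast
  qed
  have L4: "(\<lambda>(ik,am). F1 ik am) \<circ> l = (\<lambda>(a,j,q,r). cc (a + j - int q) r * cc a q * T a j q r)"
    by (auto simp: l_def F1_def T_def fun_eq_iff algebra_simps)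
  define G where "G = (\<lambda>(a::int,p::nat) ((j::int,m::nat),q::nat). if q \<le> p then cc a p * cc j m * of_nat (p choose q) *
      (P a x * ((deriv^^q) (Q j) x * (deriv^^(p-q+m)) (R (n + int p - a + int m - j)) x)) else 0)"
  have Gnz: "a \<le> N \<and> j \<le> N \<and> n + int p - a + int m - j \<le> N \<and> q \<le> p" if "G (a,p) ((j,m),q) \<noteq> 0" for a p j m q
  proof -
    have qp: "q \<le> p" using that by (auto simp: G_def split: if_splits)
    have "a \<le> N \<and> j \<le> N \<and> n + int p - a + int m - j \<le> N"
      by (rule trip_nz[where c="cc a p * cc j m * of_nat (p choose q)" and x=x and q=q and r="p-q+m", OF _ P(1) Q(1) R(1)]) (use that in \<open>simp add: G_def split: if_splits\<close>)
    then show ?thesis using qp by simp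
  qed
  have R1: "psdo_mult P (psdo_mult Q R) n x = Sum_any (\<lambda>ap. Sum_any (G ap))"
  proof -
    have "psdo_mult P (psdo_mult Q R) n x = Sum_any (mt P (psdo_mult Q R) n x)"
      by (rule mult_Sum_any[OF P(1) ordle_mult[OF Q(1) R(1)]])
    also have "\<dots> = Sum_any (\<lambda>ap. Sum_any (G ap))"
    proof (rule Sum_any.cong)
      fix ap :: "int \<times> nat" obtain a p where ap: "ap = (a,p)" by fastforce
      have "mt P (psdo_mult Q R) n x ap = (cc a p * P a x) * Sum_any (dmt Q R (n + int p - a) p x)"
        by (simp add: mt_def ap deriv_mult[OF Q(1) R(1) Q(2) R(2)] algebra_simps)
      also have "\<dots> = Sum_any (\<lambda>jm. (cc a p * P a x) * dmt Q R (n + int p - a) p x jm)"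
        by (rule Sum_any_rdistrib[OF dmt_fin[OF Q(1) R(1)]])
      also have "\<dots> = Sum_any (\<lambda>jm. Sum_any (\<lambda>q. G ap (jm,q)))"
      proof (rule Sum_any.cong)
        fix jm :: "int \<times> nat" obtain j m where jm: "jm = (j,m)" by fastforce
        have "(cc a p * P a x) * dmt Q R (n + int p - a) p x jm = (\<Sum>q\<le>p. G ap (jm,q))"
          unfolding dmt_def jm ap G_def
          by (simp add: sum_distrib_left, intro sum.cong refl) (auto simp: algebra_simps)
        also have "\<dots> = Sum_any (\<lambda>q. G ap (jm,q))"
          by (rule Sum_any_eq_sum[symmetric]) (auto simp: G_def ap jm)
        finally show "(cc a p * P a x) * dmt Q R (n + int p - a) p x jm = Sum_any (\<lambda>q. G ap (jm,q))" .
      qed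
      also have "\<dots> = Sum_any (\<lambda>(jm,q). G ap (jm,q))"
      proof (rule Sum_any_cart[of "I \<times> K" K])
        fix jm q assume nz: "G ap (jm,q) \<noteq> 0"
        obtain j m where jm: "jm = (j,m)" by fastforce
        from Gnz[of a p j m q] nz have "a \<le> N \<and> j \<le> N \<and> n + int p - a + int m - j \<le> N \<and> q \<le> p"
          by (simp add: ap jm)
        then show "jm \<in> I \<times> K \<and> q \<in> K" using N nb unfolding jm
          by (auto intro!: inI inK simp: B_def)
      qed (use fI in auto)
      finally show "mt P (psdo_mult Q R) n x ap = Sum_any (G ap)" by (simp add: case_prod_eta)
    qed
    finally show ?thesis .
  qed
  have R2: "Sum_any (\<lambda>ap. Sum_any (G ap)) = Sum_any (\<lambda>(ap, jmq). G ap jmq)"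
  proof (rule Sum_any_cart[of "I \<times> K" "(I \<times> K) \<times> K"])
    fix ap jmq assume nz: "G ap jmq \<noteq> 0"
    obtain a p j m q where e: "ap = (a,p)" "jmq = ((j,m),q)" by (metis prod.collapse)
    from Gnz[of a p j m q] nz have "a \<le> N \<and> j \<le> N \<and> n + int p - a + int m - j \<le> N \<and> q \<le> p"
      by (simp add: e)
    then show "ap \<in> I \<times> K \<and> jmq \<in> (I \<times> K) \<times> K" using N nb unfolding e
      by (auto intro!: inI inK simp: B_def)
  qed (use fI in auto)
  define l2 where "l2 = (\<lambda>(a::int,j::int,q::nat,t::nat,m::nat). ((a, q+t), ((j,m),q)))"
  have R3: "Sum_any (\<lambda>(ap,jmq). G ap jmq) = Sum_any ((\<lambda>(ap,jmq). G ap jmq) \<circ> l2)"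
  proof (rule Sum_any_reindex)
    show "inj l2" unfolding l2_def by (auto intro!: injI)
    fix z :: "(int \<times> nat) \<times> (int \<times> nat) \<times> nat"
    assume nz: "(case z of (ap, jmq) \<Rightarrow> G ap jmq) \<noteq> 0"
    obtain a p j m q where z: "z = ((a,p),((j,m),q))" by (metis prod.collapse)
    have "q \<le> p" using Gnz[of a p j m q] nz by (simp add: z)
    then have "z = l2 (a, j, q, p - q, m)" by (simp add: z l2_def)
    then show "z \<in> range l2" by blast
  qed
  define G5 where "G5 = (\<lambda>(a::int,j::int,q::nat,t::nat,m::nat). cc a (q+t) * cc j m * of_nat ((q+t) choose q) *
      (P a x * ((deriv^^q) (Q j) x * (deriv^^(t+m)) (R (n + int q + int t - a + int m - j)) x)))"
  have R4: "(\<lambda>(ap,jmq). G ap jmq) \<circ> l2 = G5"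
    by (auto simp: fun_eq_iff l2_def G_def G5_def algebra_simps)
  define H where "H = (\<lambda>((a::int,j::int,q::nat,r::nat), t::nat). if t \<le> r then G5 (a,j,q,t,r-t) else 0)"
  define l3 where "l3 = (\<lambda>(a::int,j::int,q::nat,t::nat,m::nat). ((a,j,q,t+m),t))"
  have R5: "Sum_any H = Sum_any (H \<circ> l3)"
  proof (rule Sum_any_reindex)
    show "inj l3" unfolding l3_def by (auto intro!: injI)
    fix z :: "(int \<times> int \<times> nat \<times> nat) \<times> nat"
    assume nz: "H z \<noteq> 0"
    obtain a j q r t where z: "z = ((a,j,q,r),t)" by (metis prod.collapse)
    have "t \<le> r" using nz by (simp add: z H_def split: if_splits)
    then have "z = l3 (a, j, q, t, r - t)" by (simp add: z l3_def)
    then show "z \<in> range l3" by blast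
  qed
  have R6: "H \<circ> l3 = G5" by (auto simp: fun_eq_iff H_def l3_def)
  have R7: "Sum_any (\<lambda>ajqr. Sum_any (\<lambda>t. H (ajqr,t))) = Sum_any H"
  proof -
    have "Sum_any (\<lambda>ajqr. Sum_any (\<lambda>t. H (ajqr,t))) = Sum_any (\<lambda>(ajqr,t). H (ajqr,t))"
    proof (rule Sum_any_cart[of "I \<times> I \<times> K \<times> K" K])
      fix ajqr t assume nz: "H (ajqr,t) \<noteq> 0"
      obtain a j q r where e: "ajqr = (a,j,q,r)" by (metis prod.collapse)
      have tr: "t \<le> r" using nz by (simp add: e H_def split: if_splits)
      have "a \<le> N \<and> j \<le> N \<and> n + int q + int t - a + int (r - t) - j \<le> N"
        by (rule trip_nz[where c="cc a (q+t) * cc j (r-t) * of_nat ((q+t) choose q)" and x=x and q=q and r="t+(r-t)", OF _ P(1) Q(1) R(1)]) (use nz in \<open>simp add: e H_def G5_def split: if_splits\<close>)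
      then show "ajqr \<in> I \<times> I \<times> K \<times> K \<and> t \<in> K" using N nb tr unfolding e
        by (auto intro!: inI inK simp: B_def)
    qed (use fI in auto)
    then show ?thesis by (simp add: case_prod_eta)
  qed
  have R8: "Sum_any (\<lambda>t. H ((a,j,q,r),t)) = cc (a + j - int q) r * cc a q * T a j q r" for a j q r
  proof -
    have "Sum_any (\<lambda>t. H ((a,j,q,r),t)) = (\<Sum>t\<le>r. H ((a,j,q,r),t))"
      by (rule Sum_any_eq_sum) (auto simp: H_def)
    also have "\<dots> = (\<Sum>t\<le>r. cc a (q+t) * cc j (r-t) * of_nat ((q+t) choose q) * T a j q r)"
      by (rule sum.cong) (auto simp: H_def G5_def T_def algebra_simps)
    also have "\<dots> = cc (a + j - int q) r * cc a q * T a j q r"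
      unfolding sum_distrib_right[symmetric] coef_identity[symmetric] by (rule refl)
    finally show ?thesis .
  qed
  have "psdo_mult (psdo_mult P Q) R n x = Sum_any (\<lambda>(a,j,q,r). cc (a + j - int q) r * cc a q * T a j q r)"
    using L1 L2 L3 L4 by simp
  also have "\<dots> = Sum_any (\<lambda>ajqr. Sum_any (\<lambda>t. H (ajqr,t)))"
    by (rule Sum_any.cong) (auto simp: R8)
  also have "\<dots> = psdo_mult P (psdo_mult Q R) n x"
    using R1 R2 R3 R4 R5 R6 R7 by simp
  finally show ?thesis .
qed


abbreviation sg :: "int \<Rightarrow> real" where "sg m \<equiv> (-1::real) powi m"

lemma sg_add: "sg (a + b) = sg a * sg b"
  by (rule power_int_add) simp

lemma sg_nat: "sg (int k) = (-1)^k" by simp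

lemma sg_sq: "sg a * sg a = 1"
  by (metis add.right_inverse power_int_0_right power_int_minus_one_minus sg_add)

lemma sg_diff: "sg (a - b) = sg a * sg b"
  by (metis diff_conv_add_uminus power_int_minus_one_minus sg_add)

definition adt :: "psdo \<Rightarrow> int \<Rightarrow> real \<Rightarrow> nat \<Rightarrow> real" where
  "adt P n x = (\<lambda>k. sg (n + int k) * (cc (n + int k) k * (deriv^^k) (P (n + int k)) x))"

lemma adt_zero:
  assumes "ordle P N" "k \<notin> {..nat (N - n)}"
  shows "adt P n x k = 0"
proof -
  have "n + int k > N" using assms(2) by auto
  then show ?thesis using assms(1) by (simp add: adt_def ordle_def)
qed

lemma adj_sum:
  assumes "ordle P N"
  shows "psdo_adj P n x = (\<Sum>k\<le>nat (N - n). adt P n x k)"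
proof -
  let ?S = "{k. P (n + int k) \<noteq> (\<lambda>_. 0)}"
  have S: "?S \<subseteq> {..nat (N - n)}"
    using assms ordle_nz by fastforce
  have "psdo_adj P n x = sum (adt P n x) ?S"
    unfolding psdo_adj_def adt_def by (simp add: algebra_simps)
  also have "\<dots> = sum (adt P n x) {..nat (N - n)}"
    using S by (intro sum.mono_neutral_left) (auto simp: adt_def)
  finally show ?thesis .
qed

lemma adj_Sum_any:
  assumes "ordle P N"
  shows "psdo_adj P n x = Sum_any (adt P n x)"
  unfolding adj_sum[OF assms] using adt_zero[OF assms]
  by (intro Sum_any_eq_sum[symmetric]) auto

lemma adt_fin:
  assumes "ordle P N"
  shows "finite {k. adt P n x k \<noteq> 0}"
  using fin_supp[of "{..nat (N - n)}"] adt_zero[OF assms] by blast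

lemma ordle_adj:
  assumes "ordle P N"
  shows "ordle (psdo_adj P) N"
  unfolding ordle_def
proof (intro allI impI ext)
  fix n x assume "n > N"
  then show "psdo_adj P n x = 0" unfolding adj_sum[OF assms] by (simp add: adt_def ordle_zero[OF assms])
qed

lemma smooth_adt:
  assumes "sm P"
  shows "smooth (\<lambda>x. adt P n x k)"
    "(deriv^^p) (\<lambda>x. adt P n x k) x = sg (n + int k) * (cc (n + int k) k * (deriv^^(p+k)) (P (n + int k)) x)"
proof -
  have s: "smooth ((deriv^^k) (P (n + int k)))" using assms smooth_dk unfolding sm_def by auto
  have e: "(\<lambda>x. adt P n x k) = (\<lambda>x. sg (n + int k) * (cc (n + int k) k * (deriv^^k) (P (n + int k)) x))"
    by (simp add: adt_def)
  show "smooth (\<lambda>x. adt P n x k)" unfolding e by (intro smooth_cmult s)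
  show "(deriv^^p) (\<lambda>x. adt P n x k) x = sg (n + int k) * (cc (n + int k) k * (deriv^^(p+k)) (P (n + int k)) x)"
    unfolding e by (simp add: smooth_cmult(2)[OF smooth_cmult(1)[OF s]] smooth_cmult(2)[OF s] dk_add)
qed

lemma sm_adj:
  assumes "ordle P N" "sm P"
  shows "sm (psdo_adj P)"
proof -
  have "psdo_adj P n = (\<lambda>x. \<Sum>k\<le>nat (N - n). adt P n x k)" for n
    using adj_sum[OF assms(1)] by auto
  then show ?thesis unfolding sm_def
    by (auto intro!: smooth_sum smooth_adt[OF assms(2)])
qed

lemma is_psdo_adj: "is_psdo P \<Longrightarrow> is_psdo (psdo_adj P)"
  unfolding is_psdo_iff using ordle_adj sm_adj by blast

lemma deriv_adj:
  assumes "ordle P N" "sm P"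
  shows "(deriv^^p) (psdo_adj P n) x = Sum_any (\<lambda>k. sg (n + int k) * (cc (n + int k) k * (deriv^^(p+k)) (P (n + int k)) x))"
proof -
  have "psdo_adj P n = (\<lambda>x. \<Sum>k\<le>nat (N - n). adt P n x k)"
    using adj_sum[OF assms(1)] by auto
  then have "(deriv^^p) (psdo_adj P n) x = (\<Sum>k\<le>nat (N - n). sg (n + int k) * (cc (n + int k) k * (deriv^^(p+k)) (P (n + int k)) x))"
    by (simp add: smooth_sum(2)[OF smooth_adt(1)[OF assms(2)]] smooth_adt(2)[OF assms(2)])
  also have "\<dots> = Sum_any (\<lambda>k. sg (n + int k) * (cc (n + int k) k * (deriv^^(p+k)) (P (n + int k)) x))"
  proof (rule Sum_any_eq_sum[symmetric], simp)
    fix k assume "k \<notin> {..nat (N - n)}"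
    then have "n + int k > N" by auto
    then show "sg (n + int k) * (cc (n + int k) k * (deriv^^(p+k)) (P (n + int k)) x) = 0"
      using assms(1) by (simp add: ordle_def)
  qed
  finally show ?thesis .
qed

lemma sg_split: "sg (n + int a + int b) = sg n * (-1)^a * (-1)^b"
  by (simp add: sg_add)

lemma adj_coef_L:
  fixes n i :: int and \<alpha> \<beta> :: nat
  shows "(\<Sum>t\<le>\<beta>. sg (n + int \<alpha> + int t) * cc (n + int \<alpha> + int t) (\<alpha>+t) * cc i (\<beta>-t) * of_nat ((\<alpha>+t) choose \<alpha>))
      = sg (n + int \<alpha> + int \<beta>) * cc (n + int \<alpha>) \<alpha> * cc (n + int \<alpha> + int \<beta> - i) \<beta>"
proof -
  define z :: real where "z = - of_int n - 1"
  have t: "sg (n + int \<alpha> + int t) * cc (n + int \<alpha> + int t) (\<alpha>+t) * cc i (\<beta>-t) * of_nat ((\<alpha>+t) choose \<alpha>)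
     = sg n * (z gchoose \<alpha>) * (((z - of_nat \<alpha>) gchoose t) * cc i (\<beta> - t))" for t
  proof -
    have 1: "cc (n + int \<alpha> + int t) (\<alpha>+t) = (-1)^(\<alpha>+t) * (z gchoose (\<alpha>+t))"
      by (subst gbinomial_negated_upper) (simp add: z_def algebra_simps)
    have 2: "(z gchoose (\<alpha>+t)) * of_nat ((\<alpha>+t) choose \<alpha>) = (z gchoose \<alpha>) * ((z - of_nat \<alpha>) gchoose t)"
      using gbinomial_trinomial_revision[of \<alpha> "\<alpha>+t" z] by (simp add: binomial_gbinomial)
    have 3: "sg (n + int \<alpha> + int t) * (-1)^(\<alpha>+t) = sg n"
    proof -
      have "sg (n + int \<alpha> + int t) = sg n * sg (int (\<alpha>+t))"
        by (metis add.assoc of_nat_add sg_add)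
      then show ?thesis by (metis mult.assoc mult.right_neutral sg_nat sg_sq)
    qed
    have "sg (n + int \<alpha> + int t) * cc (n + int \<alpha> + int t) (\<alpha>+t) * cc i (\<beta>-t) * of_nat ((\<alpha>+t) choose \<alpha>)
        = (sg (n + int \<alpha> + int t) * (-1)^(\<alpha>+t)) * ((z gchoose (\<alpha>+t)) * of_nat ((\<alpha>+t) choose \<alpha>)) * cc i (\<beta>-t)"
      unfolding 1 by (simp add: algebra_simps)
    also have "\<dots> = sg n * (z gchoose \<alpha>) * (((z - of_nat \<alpha>) gchoose t) * cc i (\<beta> - t))"
      unfolding 2 3 by (simp add: algebra_simps)
    finally show ?thesis .
  qed
  have "(\<Sum>t\<le>\<beta>. sg (n + int \<alpha> + int t) * cc (n + int \<alpha> + int t) (\<alpha>+t) * cc i (\<beta>-t) * of_nat ((\<alpha>+t) choose \<alpha>))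
      = sg n * (z gchoose \<alpha>) * (\<Sum>t\<le>\<beta>. ((z - of_nat \<alpha>) gchoose t) * cc i (\<beta> - t))"
    unfolding t sum_distrib_left by (rule refl)
  also have "(\<Sum>t\<le>\<beta>. ((z - of_nat \<alpha>) gchoose t) * cc i (\<beta> - t)) = ((z - of_nat \<alpha> + of_int i) gchoose \<beta>)"
    using gbinomial_Vandermonde[of "z - of_nat \<alpha>" "of_int i" \<beta>] by (simp add: atLeast0AtMost)
  also have "(z gchoose \<alpha>) = (-1)^\<alpha> * cc (n + int \<alpha>) \<alpha>"
    by (subst gbinomial_negated_upper) (simp add: z_def algebra_simps)
  also have "((z - of_nat \<alpha> + of_int i) gchoose \<beta>) = (-1)^\<beta> * cc (n + int \<alpha> + int \<beta> - i) \<beta>"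
    by (subst gbinomial_negated_upper) (simp add: z_def algebra_simps)
  finally show ?thesis unfolding sg_split by (simp add: algebra_simps)
qed

lemma adj_coef_R:
  fixes n i :: int and \<alpha> \<beta> :: nat
  shows "(\<Sum>u\<le>\<alpha>. cc (n + int \<alpha> - i) u * sg (n + int \<alpha> - i + int \<beta>) * cc (n + int \<alpha> - i + int \<beta>) \<beta> * sg i * cc i (\<alpha>-u))
      = sg (n + int \<alpha> + int \<beta>) * cc (n + int \<alpha>) \<alpha> * cc (n + int \<alpha> + int \<beta> - i) \<beta>"
proof -
  have s: "sg (n + int \<alpha> - i + int \<beta>) * sg i = sg (n + int \<alpha> + int \<beta>)"
    by (metis diff_add_cancel add.commute add.left_commute sg_add)
  have "(\<Sum>u\<le>\<alpha>. cc (n + int \<alpha> - i) u * sg (n + int \<alpha> - i + int \<beta>) * cc (n + int \<alpha> - i + int \<beta>) \<beta> * sg i * cc i (\<alpha>-u))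
     = (sg (n + int \<alpha> - i + int \<beta>) * sg i) * cc (n + int \<alpha> - i + int \<beta>) \<beta> * (\<Sum>u\<le>\<alpha>. cc (n + int \<alpha> - i) u * cc i (\<alpha>-u))"
    by (simp add: sum_distrib_left algebra_simps)
  also have "(\<Sum>u\<le>\<alpha>. cc (n + int \<alpha> - i) u * cc i (\<alpha>-u)) = cc (n + int \<alpha>) \<alpha>"
    using gbinomial_Vandermonde[of "of_int (n + int \<alpha> - i)" "of_int i" \<alpha>] by (simp add: atLeast0AtMost)
  finally show ?thesis unfolding s by (simp add: algebra_simps)
qed

lemma adj_adj_coef:
  fixes n :: int
  shows "(\<Sum>k\<le>r. sg (n + int k) * cc (n + int k) k * (sg (n + int r) * cc (n + int r) (r - k))) = (if r = 0 then 1 else 0)"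
proof -
  have t: "sg (n + int k) * cc (n + int k) k * (sg (n + int r) * cc (n + int r) (r - k))
     = cc (n + int r) r * ((-1)^(r-k) * of_nat (r choose (r-k)))" if "k \<le> r" for k
  proof -
    have 1: "sg (n + int k) * sg (n + int r) = (-1)^(r-k)"
    proof -
      have "n + int r = (n + int k) + int (r - k)" using that by simp
      then have "sg (n + int r) = sg (n + int k) * (-1)^(r-k)" by (simp only: sg_add sg_nat)
      then show ?thesis by (metis mult.assoc mult_1 sg_sq)
    qed
    have 2: "cc (n + int r) r * of_nat (r choose (r-k)) = cc (n + int r) (r-k) * cc (n + int k) k"
      using gbinomial_trinomial_revision[of "r-k" r "of_int (n + int r)"] that
      by (simp add: binomial_gbinomial of_nat_diff)
    show ?thesis using 1 2 by (simp add: algebra_simps) (metis mult.commute mult.left_commute)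
  qed
  have "(\<Sum>k\<le>r. sg (n + int k) * cc (n + int k) k * (sg (n + int r) * cc (n + int r) (r - k)))
      = cc (n + int r) r * (\<Sum>k\<le>r. (-1)^(r-k) * of_nat (r choose (r-k)))"
    unfolding sum_distrib_left by (rule sum.cong[OF refl], rule t, simp)
  also have "(\<Sum>k\<le>r. (-1)^(r-k) * of_nat (r choose (r-k)) :: real) = (\<Sum>j\<le>r. (-1)^j * of_nat (r choose j))"
    by (rule sum.reindex_bij_witness[of _ "\<lambda>j. r - j" "\<lambda>k. r - k"]) auto
  finally show ?thesis
    by (cases "r = 0") (simp_all add: choose_alternating_sum)
qed

lemma adj_mult_N:
  assumes P: "ordle P N" "sm P" and Q: "ordle Q N" "sm Q" and N: "0 \<le> N"
  shows "psdo_adj (psdo_mult P Q) n x = psdo_mult (psdo_adj Q) (psdo_adj P) n x"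
proof -
  define B where "B = 3*N + \<bar>n\<bar>"
  define I where "I = {-B..B}"
  define K where "K = {..nat B}"
  have fI: "finite I" "finite K" unfolding I_def K_def by auto
  have nb: "-\<bar>n\<bar> \<le> n" "n \<le> \<bar>n\<bar>" by auto
  have inI: "i \<in> I" if "-B \<le> i" "i \<le> B" for i using that by (simp add: I_def)
  have inK: "k \<in> K" if "int k \<le> B" for k using that by (simp add: K_def nat_le_iff)
  have dP: "i \<le> N" if "(deriv^^a) (P i) x \<noteq> 0" for a i using ordle_dnz[OF P(1) that] .
  have dQ: "i \<le> N" if "(deriv^^a) (Q i) x \<noteq> 0" for a i using ordle_dnz[OF Q(1) that] .
  define U where "U = (\<lambda>(i::int) (\<alpha>::nat) (\<beta>::nat). (deriv^^\<alpha>) (P i) x * (deriv^^\<beta>) (Q (n + int \<alpha> + int \<beta> - i)) x)"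
  define GA where "GA = (\<lambda>(k::nat) ((i::int,m::nat),l::nat). if l \<le> k then sg (n + int k) * cc (n + int k) k * cc i m * of_nat (k choose l) *
      ((deriv^^l) (P i) x * (deriv^^(k-l+m)) (Q (n + int k + int m - i)) x) else 0)"
  have GAnz: "l \<le> k \<and> i \<le> N \<and> n + int k + int m - i \<le> N" if "GA k ((i,m),l) \<noteq> 0" for k i m l
    using that dP dQ by (auto simp: GA_def split: if_splits)
  have L1: "psdo_adj (psdo_mult P Q) n x = Sum_any (\<lambda>k. Sum_any (GA k))"
  proof -
    have "psdo_adj (psdo_mult P Q) n x = Sum_any (adt (psdo_mult P Q) n x)"
      by (rule adj_Sum_any[OF ordle_mult[OF P(1) Q(1)]])
    also have "\<dots> = Sum_any (\<lambda>k. Sum_any (GA k))"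
    proof (rule Sum_any.cong)
      fix k
      have "adt (psdo_mult P Q) n x k = (sg (n + int k) * cc (n + int k) k) * Sum_any (dmt P Q (n + int k) k x)"
        by (simp add: adt_def deriv_mult[OF P(1) Q(1) P(2) Q(2)] algebra_simps)
      also have "\<dots> = Sum_any (\<lambda>im. (sg (n + int k) * cc (n + int k) k) * dmt P Q (n + int k) k x im)"
        by (rule Sum_any_rdistrib[OF dmt_fin[OF P(1) Q(1)]])
      also have "\<dots> = Sum_any (\<lambda>im. Sum_any (\<lambda>l. GA k (im,l)))"
      proof (rule Sum_any.cong)
        fix im :: "int \<times> nat" obtain i m where im: "im = (i,m)" by fastforce
        have "(sg (n + int k) * cc (n + int k) k) * dmt P Q (n + int k) k x im = (\<Sum>l\<le>k. GA k (im,l))"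
          unfolding dmt_def im GA_def
          by (simp add: sum_distrib_left, intro sum.cong refl) (auto simp: algebra_simps)
        also have "\<dots> = Sum_any (\<lambda>l. GA k (im,l))"
          by (rule Sum_any_eq_sum[symmetric]) (auto simp: GA_def im)
        finally show "(sg (n + int k) * cc (n + int k) k) * dmt P Q (n + int k) k x im = Sum_any (\<lambda>l. GA k (im,l))" .
      qed
      also have "\<dots> = Sum_any (\<lambda>(im,l). GA k (im,l))"
      proof (rule Sum_any_cart[of "I \<times> K" K])
        fix im l assume nz: "GA k (im,l) \<noteq> 0"
        obtain i m where im: "im = (i,m)" by fastforce
        from GAnz[of k i m l] nz have "l \<le> k \<and> i \<le> N \<and> n + int k + int m - i \<le> N" by (simp add: im)
        then show "im \<in> I \<times> K \<and> l \<in> K" using N nb unfolding im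
          by (auto intro!: inI inK simp: B_def)
      qed (use fI in auto)
      finally show "adt (psdo_mult P Q) n x k = Sum_any (GA k)" by (simp add: case_prod_eta)
    qed
    finally show ?thesis .
  qed
  have L2: "Sum_any (\<lambda>k. Sum_any (GA k)) = Sum_any (\<lambda>(k, iml). GA k iml)"
  proof (rule Sum_any_cart[of K "(I \<times> K) \<times> K"])
    fix k iml assume nz: "GA k iml \<noteq> 0"
    obtain i m l where e: "iml = ((i,m),l)" by (metis prod.collapse)
    from GAnz[of k i m l] nz have "l \<le> k \<and> i \<le> N \<and> n + int k + int m - i \<le> N" by (simp add: e)
    then show "k \<in> K \<and> iml \<in> (I \<times> K) \<times> K" using N nb unfolding e
      by (auto intro!: inI inK simp: B_def)
  qed (use fI in auto)
  define l2 where "l2 = (\<lambda>(i::int,\<alpha>::nat,t::nat,m::nat). (\<alpha>+t, ((i,m),\<alpha>)))"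
  have L3: "Sum_any (\<lambda>(k, iml). GA k iml) = Sum_any ((\<lambda>(k, iml). GA k iml) \<circ> l2)"
  proof (rule Sum_any_reindex)
    show "inj l2" unfolding l2_def by (auto intro!: injI)
    fix z :: "nat \<times> (int \<times> nat) \<times> nat"
    assume nz: "(case z of (k, iml) \<Rightarrow> GA k iml) \<noteq> 0"
    obtain k i m l where z: "z = (k,((i,m),l))" by (metis prod.collapse)
    have "l \<le> k" using GAnz[of k i m l] nz by (simp add: z)
    then have "z = l2 (i, l, k - l, m)" by (simp add: z l2_def)
    then show "z \<in> range l2" by blast
  qed
  define GA4 where "GA4 = (\<lambda>(i::int,\<alpha>::nat,t::nat,m::nat). sg (n + int \<alpha> + int t) * cc (n + int \<alpha> + int t) (\<alpha>+t) * cc i m * of_nat ((\<alpha>+t) choose \<alpha>) *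
      ((deriv^^\<alpha>) (P i) x * (deriv^^(t+m)) (Q (n + int \<alpha> + int t + int m - i)) x))"
  have L4: "(\<lambda>(k, iml). GA k iml) \<circ> l2 = GA4"
    by (auto simp: fun_eq_iff l2_def GA_def GA4_def algebra_simps)
  define H where "H = (\<lambda>((i::int,\<alpha>::nat,\<beta>::nat), t::nat). if t \<le> \<beta> then GA4 (i,\<alpha>,t,\<beta>-t) else 0)"
  define l3 where "l3 = (\<lambda>(i::int,\<alpha>::nat,t::nat,m::nat). ((i,\<alpha>,t+m),t))"
  have L5: "Sum_any H = Sum_any (H \<circ> l3)"
  proof (rule Sum_any_reindex)
    show "inj l3" unfolding l3_def by (auto intro!: injI)
    fix z :: "(int \<times> nat \<times> nat) \<times> nat"
    assume nz: "H z \<noteq> 0"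
    obtain i a b t where z: "z = ((i,a,b),t)" by (metis prod.collapse)
    have "t \<le> b" using nz by (simp add: z H_def split: if_splits)
    then have "z = l3 (i, a, t, b - t)" by (simp add: z l3_def)
    then show "z \<in> range l3" by blast
  qed
  have L6: "H \<circ> l3 = GA4" by (auto simp: fun_eq_iff H_def l3_def)
  have L7: "Sum_any (\<lambda>iab. Sum_any (\<lambda>t. H (iab,t))) = Sum_any H"
  proof -
    have "Sum_any (\<lambda>iab. Sum_any (\<lambda>t. H (iab,t))) = Sum_any (\<lambda>(iab,t). H (iab,t))"
    proof (rule Sum_any_cart[of "I \<times> K \<times> K" K])
      fix iab t assume nz: "H (iab,t) \<noteq> 0"
      obtain i a b where e: "iab = (i,a,b)" by (metis prod.collapse)
      have tb: "t \<le> b" using nz by (simp add: e H_def split: if_splits)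
      have "i \<le> N \<and> n + int a + int t + int (b - t) - i \<le> N"
        using nz dP dQ by (auto simp: e H_def GA4_def split: if_splits)
      then show "iab \<in> I \<times> K \<times> K \<and> t \<in> K" using N nb tb unfolding e
        by (auto intro!: inI inK simp: B_def)
    qed (use fI in auto)
    then show ?thesis by (simp add: case_prod_eta)
  qed
  have L8: "Sum_any (\<lambda>t. H ((i,a,b),t)) = sg (n + int a + int b) * cc (n + int a) a * cc (n + int a + int b - i) b * U i a b" for i a b
  proof -
    have "Sum_any (\<lambda>t. H ((i,a,b),t)) = (\<Sum>t\<le>b. H ((i,a,b),t))"
      by (rule Sum_any_eq_sum) (auto simp: H_def)
    also have "\<dots> = (\<Sum>t\<le>b. sg (n + int a + int t) * cc (n + int a + int t) (a+t) * cc i (b-t) * of_nat ((a+t) choose a) * U i a b)"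
      by (rule sum.cong) (auto simp: H_def GA4_def U_def algebra_simps)
    also have "\<dots> = sg (n + int a + int b) * cc (n + int a) a * cc (n + int a + int b - i) b * U i a b"
      unfolding sum_distrib_right[symmetric] adj_coef_L by (rule refl)
    finally show ?thesis .
  qed
  have LHS: "psdo_adj (psdo_mult P Q) n x = Sum_any (\<lambda>(i,a,b). sg (n + int a + int b) * cc (n + int a) a * cc (n + int a + int b - i) b * U i a b)"
  proof -
    have "psdo_adj (psdo_mult P Q) n x = Sum_any (\<lambda>iab. Sum_any (\<lambda>t. H (iab,t)))"
      using L1 L2 L3 L4 L5 L6 L7 by simp
    also have "\<dots> = Sum_any (\<lambda>(i,a,b). sg (n + int a + int b) * cc (n + int a) a * cc (n + int a + int b - i) b * U i a b)"
      by (rule Sum_any.cong) (auto simp: L8)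
    finally show ?thesis .
  qed
  define GB where "GB = (\<lambda>(j::int,p::nat) (s::nat,s'::nat). cc j p * (adt Q j x s * (sg (n + int p - j + int s') *
      (cc (n + int p - j + int s') s' * (deriv^^(p+s')) (P (n + int p - j + int s')) x))))"
  have GBnz: "j + int s \<le> N \<and> n + int p - j + int s' \<le> N" if "GB (j,p) (s,s') \<noteq> 0" for j p s s'
    using that dP dQ by (auto simp: GB_def adt_def)
  have R1: "psdo_mult (psdo_adj Q) (psdo_adj P) n x = Sum_any (\<lambda>jp. Sum_any (GB jp))"
  proof -
    have "psdo_mult (psdo_adj Q) (psdo_adj P) n x = Sum_any (mt (psdo_adj Q) (psdo_adj P) n x)"
      by (rule mult_Sum_any[OF ordle_adj[OF Q(1)] ordle_adj[OF P(1)]])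
    also have "\<dots> = Sum_any (\<lambda>jp. Sum_any (GB jp))"
    proof (rule Sum_any.cong)
      fix jp :: "int \<times> nat" obtain j p where jp: "jp = (j,p)" by fastforce
      define f where "f = adt Q j x"
      define g where "g = (\<lambda>s'. sg (n + int p - j + int s') *
        (cc (n + int p - j + int s') s' * (deriv^^(p+s')) (P (n + int p - j + int s')) x))"
      have ff: "finite {s. f s \<noteq> 0}" unfolding f_def by (rule adt_fin[OF Q(1)])
      have fg: "finite {s. g s \<noteq> 0}"
      proof (rule fin_supp[of "{..nat (N - (n + int p - j))}"], simp)
        fix s assume "g s \<noteq> 0"
        then have "n + int p - j + int s \<le> N" using dP by (auto simp: g_def)
        then show "s \<in> {..nat (N - (n + int p - j))}" by auto
      qed
      have "mt (psdo_adj Q) (psdo_adj P) n x jp = cc j p * (Sum_any f * Sum_any g)"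
        unfolding mt_def jp f_def g_def
        by (simp add: adj_Sum_any[OF Q(1)] deriv_adj[OF P(1) P(2)] algebra_simps)
      also have "\<dots> = cc j p * Sum_any (\<lambda>s. Sum_any (\<lambda>s'. f s * g s'))"
        by (simp add: Sum_any_product[OF ff fg])
      also have "\<dots> = Sum_any (\<lambda>s. cc j p * Sum_any (\<lambda>s'. f s * g s'))"
        by (rule Sum_any_rdistrib, rule fin_supp[of "{s. f s \<noteq> 0}"]) (use ff in auto)
      also have "\<dots> = Sum_any (\<lambda>s. Sum_any (\<lambda>s'. GB jp (s,s')))"
      proof (rule Sum_any.cong)
        fix s
        have "cc j p * Sum_any (\<lambda>s'. f s * g s') = Sum_any (\<lambda>s'. cc j p * (f s * g s'))"
          by (rule Sum_any_rdistrib, rule fin_supp[of "{s'. g s' \<noteq> 0}"]) (use fg in auto)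
        then show "cc j p * Sum_any (\<lambda>s'. f s * g s') = Sum_any (\<lambda>s'. GB jp (s,s'))"
          by (simp add: GB_def jp f_def g_def)
      qed
      also have "\<dots> = Sum_any (\<lambda>(s,s'). GB jp (s,s'))"
      proof (rule Sum_any_cart[of K K])
        fix s s' assume nz: "GB jp (s,s') \<noteq> 0"
        have "j + int s \<le> N \<and> n + int p - j + int s' \<le> N" using GBnz nz jp by simp
        then show "s \<in> K \<and> s' \<in> K" using N nb by (auto intro!: inK simp: B_def)
      qed (use fI in auto)
      finally show "mt (psdo_adj Q) (psdo_adj P) n x jp = Sum_any (GB jp)" by (simp add: case_prod_eta)
    qed
    finally show ?thesis .
  qed
  have R2: "Sum_any (\<lambda>jp. Sum_any (GB jp)) = Sum_any (\<lambda>(jp,ss). GB jp ss)"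
  proof (rule Sum_any_cart[of "I \<times> K" "K \<times> K"])
    fix jp ss assume nz: "GB jp ss \<noteq> 0"
    obtain j p s s' where e: "jp = (j,p)" "ss = (s,s')" by fastforce
    have "j + int s \<le> N \<and> n + int p - j + int s' \<le> N" using GBnz nz e by simp
    then show "jp \<in> I \<times> K \<and> ss \<in> K \<times> K" using N nb unfolding e by (auto intro!: inI inK simp: B_def)
  qed (use fI in auto)
  define HB where "HB = (\<lambda>((i::int,\<alpha>::nat,\<beta>::nat),u::nat). if u \<le> \<alpha> then GB (n + int \<alpha> - i, u) (\<beta>, \<alpha> - u) else 0)"
  define l where "l = (\<lambda>((j::int,p::nat),(s::nat,s'::nat)). ((n + int p + int s' - j, p + s', s), p))"
  have R3: "Sum_any HB = Sum_any (HB \<circ> l)"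
  proof (rule Sum_any_reindex)
    show "inj l" unfolding l_def by (auto intro!: injI)
    fix z :: "(int \<times> nat \<times> nat) \<times> nat"
    assume nz: "HB z \<noteq> 0"
    obtain i a b u where z: "z = ((i,a,b),u)" by (metis prod.collapse)
    have "u \<le> a" using nz by (simp add: z HB_def split: if_splits)
    then have "z = l ((n + int a - i, u), (b, a - u))" by (simp add: z l_def)
    then show "z \<in> range l" by blast
  qed
  have R4: "HB \<circ> l = (\<lambda>(jp,ss). GB jp ss)"
    by (auto simp: fun_eq_iff HB_def l_def)
  have R5: "Sum_any (\<lambda>iab. Sum_any (\<lambda>u. HB (iab,u))) = Sum_any HB"
  proof -
    have "Sum_any (\<lambda>iab. Sum_any (\<lambda>u. HB (iab,u))) = Sum_any (\<lambda>(iab,u). HB (iab,u))"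
    proof (rule Sum_any_cart[of "I \<times> K \<times> K" K])
      fix iab u assume nz: "HB (iab,u) \<noteq> 0"
      obtain i a b where e: "iab = (i,a,b)" by (metis prod.collapse)
      have ua: "u \<le> a" using nz by (simp add: e HB_def split: if_splits)
      have "n + int a - i + int b \<le> N \<and> n + int u - (n + int a - i) + int (a - u) \<le> N"
        using GBnz[of "n + int a - i" u b "a - u"] nz by (simp add: e HB_def split: if_splits)
      then show "iab \<in> I \<times> K \<times> K \<and> u \<in> K" using N nb ua unfolding e
        by (auto intro!: inI inK simp: B_def)
    qed (use fI in auto)
    then show ?thesis by (simp add: case_prod_eta)
  qed
  have R6: "Sum_any (\<lambda>u. HB ((i,a,b),u)) = sg (n + int a + int b) * cc (n + int a) a * cc (n + int a + int b - i) b * U i a b" for i a b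
  proof -
    have "Sum_any (\<lambda>u. HB ((i,a,b),u)) = (\<Sum>u\<le>a. HB ((i,a,b),u))"
      by (rule Sum_any_eq_sum) (auto simp: HB_def)
    also have "\<dots> = (\<Sum>u\<le>a. cc (n + int a - i) u * sg (n + int a - i + int b) * cc (n + int a - i + int b) b * sg i * cc i (a-u) * U i a b)"
      by (rule sum.cong) (auto simp: HB_def GB_def adt_def U_def algebra_simps)
    also have "\<dots> = sg (n + int a + int b) * cc (n + int a) a * cc (n + int a + int b - i) b * U i a b"
      unfolding sum_distrib_right[symmetric] adj_coef_R by (rule refl)
    finally show ?thesis .
  qed
  have "psdo_mult (psdo_adj Q) (psdo_adj P) n x = Sum_any (\<lambda>iab. Sum_any (\<lambda>u. HB (iab,u)))"
    using R1 R2 R3 R4 R5 by simp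
  also have "\<dots> = Sum_any (\<lambda>(i,a,b). sg (n + int a + int b) * cc (n + int a) a * cc (n + int a + int b - i) b * U i a b)"
    by (rule Sum_any.cong) (auto simp: R6)
  finally show ?thesis using LHS by simp
qed

lemma adj_adj_N:
  assumes P: "ordle P N" "sm P"
  shows "psdo_adj (psdo_adj P) n x = P n x"
proof -
  define K where "K = {..nat (N - n)}"
  have fK: "finite K" unfolding K_def by auto
  define F where "F = (\<lambda>(k::nat,l::nat). sg (n + int k) * cc (n + int k) k * (sg (n + int k + int l) *
      (cc (n + int k + int l) l * (deriv^^(k+l)) (P (n + int k + int l)) x)))"
  have Fnz: "n + int k + int l \<le> N" if "F (k,l) \<noteq> 0" for k l
    using that ordle_dnz[OF P(1)] by (auto simp: F_def)
  have "psdo_adj (psdo_adj P) n x = Sum_any (adt (psdo_adj P) n x)"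
    by (rule adj_Sum_any[OF ordle_adj[OF P(1)]])
  also have "\<dots> = Sum_any (\<lambda>k. Sum_any (\<lambda>l. F (k,l)))"
  proof (rule Sum_any.cong)
    fix k
    have "adt (psdo_adj P) n x k = (sg (n + int k) * cc (n + int k) k) * Sum_any (\<lambda>l. sg (n + int k + int l) *
      (cc (n + int k + int l) l * (deriv^^(k+l)) (P (n + int k + int l)) x))"
      by (simp add: adt_def deriv_adj[OF P] algebra_simps)
    also have "\<dots> = Sum_any (\<lambda>l. F (k,l))"
      unfolding F_def
    proof (subst Sum_any_rdistrib, rule fin_supp[of K])
      fix l assume "sg (n + int k + int l) * (cc (n + int k + int l) l * (deriv^^(k+l)) (P (n + int k + int l)) x) \<noteq> 0"
      then have "n + int k + int l \<le> N" using ordle_dnz[OF P(1)] by auto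
      then show "l \<in> K" by (auto simp: K_def)
    qed (auto simp: fK)
    finally show "adt (psdo_adj P) n x k = Sum_any (\<lambda>l. F (k,l))" .
  qed
  also have "\<dots> = Sum_any F"
  proof -
    have "Sum_any (\<lambda>k. Sum_any (\<lambda>l. F (k,l))) = Sum_any (\<lambda>(k,l). F (k,l))"
    proof (rule Sum_any_cart[of K K])
      fix k l assume "F (k,l) \<noteq> 0"
      then have "n + int k + int l \<le> N" by (rule Fnz)
      then show "k \<in> K \<and> l \<in> K" by (auto simp: K_def)
    qed (use fK in auto)
    then show ?thesis by (simp add: case_prod_eta)
  qed
  also have "\<dots> = Sum_any (\<lambda>(r,k). if k \<le> r then F (k, r - k) else 0)" (is "_ = Sum_any ?H")
  proof -
    define l where "l = (\<lambda>(k::nat,m::nat). (k+m, k))"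
    have "Sum_any ?H = Sum_any (?H \<circ> l)"
    proof (rule Sum_any_reindex)
      show "inj l" unfolding l_def by (auto intro!: injI)
      fix z :: "nat \<times> nat" assume nz: "?H z \<noteq> 0"
      obtain r k where z: "z = (r,k)" by fastforce
      have "k \<le> r" using nz by (simp add: z split: if_splits)
      then have "z = l (k, r - k)" by (simp add: z l_def)
      then show "z \<in> range l" by blast
    qed
    also have "?H \<circ> l = F" by (auto simp: fun_eq_iff l_def)
    finally show ?thesis by simp
  qed
  also have "\<dots> = Sum_any (\<lambda>r. Sum_any (\<lambda>k. if k \<le> r then F (k, r - k) else 0))"
  proof (rule Sum_any_cart[symmetric, of K K])
    fix r k assume nz: "(if k \<le> r then F (k, r - k) else 0) \<noteq> 0"
    then have kr: "k \<le> r" and "F (k, r - k) \<noteq> 0" by (auto split: if_splits)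
    then have "n + int k + int (r - k) \<le> N" by (intro Fnz)
    then have "k \<le> r" "n + int r \<le> N" using kr by auto
    then show "r \<in> K \<and> k \<in> K" by (auto simp: K_def)
  qed (use fK in auto)
  also have "\<dots> = Sum_any (\<lambda>r::nat. if r = 0 then P n x else 0)"
  proof (rule Sum_any.cong)
    fix r
    have "Sum_any (\<lambda>k. if k \<le> r then F (k, r - k) else 0) = (\<Sum>k\<le>r. F (k, r - k))"
      by (subst Sum_any_eq_sum[of "{..r}"]) auto
    also have "\<dots> = (\<Sum>k\<le>r. sg (n + int k) * cc (n + int k) k * (sg (n + int r) * cc (n + int r) (r - k)) * (deriv^^r) (P (n + int r)) x)"
      by (rule sum.cong) (auto simp: F_def algebra_simps)
    also have "\<dots> = (if r = 0 then P n x else 0)"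
      unfolding sum_distrib_right[symmetric] adj_adj_coef by simp
    finally show "Sum_any (\<lambda>k. if k \<le> r then F (k, r - k) else 0) = (if r = 0 then P n x else 0)" .
  qed
  also have "\<dots> = P n x" by simp
  finally show ?thesis .
qed


lemma common_bound:
  assumes "is_psdo P" "is_psdo Q" "is_psdo R"
  obtains N where "ordle P N" "ordle Q N" "ordle R N" "0 \<le> N" "sm P" "sm Q" "sm R"
proof -
  obtain a b c where "ordle P a" "ordle Q b" "ordle R c" "sm P" "sm Q" "sm R"
    using assms unfolding is_psdo_iff by blast
  then show ?thesis
    using that[of "max (max a b) (max c 0)"] ordle_mono by (meson max.cobounded1 max.cobounded2 order_trans)
qed

lemma assoc:
  assumes "is_psdo P" "is_psdo Q" "is_psdo R"
  shows "psdo_mult (psdo_mult P Q) R = psdo_mult P (psdo_mult Q R)"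
proof -
  obtain N where "ordle P N" "ordle Q N" "ordle R N" "0 \<le> N" "sm P" "sm Q" "sm R"
    using common_bound[OF assms] by blast
  then show ?thesis using assoc_N by (intro ext) blast
qed

lemma adj_mult:
  assumes "is_psdo P" "is_psdo Q"
  shows "psdo_adj (psdo_mult P Q) = psdo_mult (psdo_adj Q) (psdo_adj P)"
proof -
  obtain N where "ordle P N" "ordle Q N" "0 \<le> N" "sm P" "sm Q"
    using common_bound[OF assms assms(1)] by blast
  then show ?thesis using adj_mult_N by (intro ext) blast
qed

lemma adj_adj:
  assumes "is_psdo P"
  shows "psdo_adj (psdo_adj P) = P"
  using assms adj_adj_N unfolding is_psdo_iff by (intro ext) blast

lemma ordle_dpow: "ordle (dpow m) m" unfolding ordle_def dpow_def by auto
lemma sm_dpow: "sm (dpow m)" unfolding sm_def dpow_def by auto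
lemma is_psdo_dpow: "is_psdo (dpow m)" unfolding is_psdo_iff using ordle_dpow sm_dpow by blast

lemma dk_dpow: "(deriv^^k) (dpow m j) x = (if k = 0 \<and> j = m then 1 else 0)"
proof (cases k)
  case (Suc k') then show ?thesis unfolding dpow_def by (metis dk_const dk_zero nat.distinct(1))
qed (simp add: dpow_def)

lemma mult_dpow_right:
  assumes "ordle P N"
  shows "psdo_mult P (dpow m) n x = P (n - m) x"
proof -
  have "psdo_mult P (dpow m) n x = Sum_any (mt P (dpow m) n x)"
    by (rule mult_Sum_any[OF assms ordle_dpow])
  also have "\<dots> = sum (mt P (dpow m) n x) {(n - m, 0)}"
    by (rule Sum_any_eq_sum) (auto simp: mt_def dk_dpow split: if_splits)
  also have "\<dots> = P (n - m) x" by (simp add: mt_def dk_dpow)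
  finally show ?thesis .
qed

lemma mult_dpow_left:
  assumes "ordle P N"
  shows "psdo_mult (dpow m) P n x = Sum_any (\<lambda>k. cc m k * (deriv^^k) (P (n + int k - m)) x)"
proof -
  have "psdo_mult (dpow m) P n x = Sum_any (mt (dpow m) P n x)"
    by (rule mult_Sum_any[OF ordle_dpow assms])
  also have "\<dots> = Sum_any (\<lambda>k. mt (dpow m) P n x (m,k))"
  proof (rule Sum_any_reindex[of "\<lambda>k. (m,k)", unfolded comp_def])
    show "inj (\<lambda>k. (m, k))" by (auto intro: injI)
    fix a assume "mt (dpow m) P n x a \<noteq> 0"
    then show "a \<in> range (\<lambda>k. (m, k))" by (cases a) (auto simp: mt_def dpow_def split: if_splits)
  qed
  also have "\<dots> = Sum_any (\<lambda>k. cc m k * (deriv^^k) (P (n + int k - m)) x)"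
    by (simp add: mt_def dpow_def)
  finally show ?thesis .
qed

lemma mult_dpow0_left:
  assumes "ordle P N"
  shows "psdo_mult (dpow 0) P n x = P n x"
proof -
  have "Sum_any (\<lambda>k. cc 0 k * (deriv^^k) (P (n + int k - 0)) x) = sum (\<lambda>k. cc 0 k * (deriv^^k) (P (n + int k - 0)) x) {0}"
    by (rule Sum_any_eq_sum) (auto simp: gbinomial_0_left)
  then show ?thesis unfolding mult_dpow_left[OF assms] by simp
qed

lemma mult_dpow1_left:
  assumes "ordle P N"
  shows "psdo_mult (dpow 1) P n x = P (n - 1) x + deriv (P n) x"
proof -
  have c: "cc 1 k = 0" if "k \<ge> 2" for k
  proof -
    have "(1::real) gchoose k = of_nat (1 choose k)" by (simp add: binomial_gbinomial)
    then show ?thesis using that by simp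
  qed
  have "Sum_any (\<lambda>k. cc 1 k * (deriv^^k) (P (n + int k - 1)) x) = sum (\<lambda>k. cc 1 k * (deriv^^k) (P (n + int k - 1)) x) {0,1}"
    by (rule Sum_any_eq_sum) (use c in auto)
  then show ?thesis unfolding mult_dpow_left[OF assms] by simp
qed

lemma dpow_dpow: "psdo_mult (dpow m) (dpow k) = dpow (m + k)"
proof (intro ext)
  fix n x show "psdo_mult (dpow m) (dpow k) n x = dpow (m + k) n x"
    by (subst mult_dpow_right[OF ordle_dpow]) (auto simp: dpow_def)
qed

lemma mult_one_left: "is_psdo P \<Longrightarrow> psdo_mult (dpow 0) P = P"
  unfolding is_psdo_iff using mult_dpow0_left by (intro ext) blast

lemma mult_one_right: "is_psdo P \<Longrightarrow> psdo_mult P (dpow 0) = P"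
  unfolding is_psdo_iff using mult_dpow_right by (intro ext) (metis diff_zero)

lemma adj_dpow: "psdo_adj (dpow m) = (\<lambda>n x. sg m * dpow m n x)"
proof (intro ext)
  fix n x
  have "psdo_adj (dpow m) n x = Sum_any (adt (dpow m) n x)" by (rule adj_Sum_any[OF ordle_dpow])
  also have "\<dots> = sum (adt (dpow m) n x) {0}"
    by (rule Sum_any_eq_sum) (auto simp: adt_def dk_dpow)
  also have "\<dots> = sg m * dpow m n x" by (auto simp: adt_def dpow_def)
  finally show "psdo_adj (dpow m) n x = sg m * dpow m n x" .
qed

definition neg :: "psdo \<Rightarrow> psdo" where "neg P = (\<lambda>n x. - P n x)"

lemma mult_neg_left: "ordle P N \<Longrightarrow> ordle Q M \<Longrightarrow> psdo_mult (neg P) Q = neg (psdo_mult P Q)"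
proof (intro ext)
  fix n x assume a: "ordle P N" "ordle Q M"
  have o: "ordle (neg P) N" using a(1) by (auto simp: ordle_def neg_def)
  have "psdo_mult (neg P) Q n x = Sum_any (\<lambda>z. - mt P Q n x z)"
    unfolding mult_Sum_any[OF o a(2)] by (rule Sum_any.cong) (auto simp: mt_def neg_def split: prod.splits)
  also have "\<dots> = - Sum_any (mt P Q n x)"
    using Sum_any_rdistrib[OF mt_fin[OF a], of "-1" n x] by simp
  finally show "psdo_mult (neg P) Q n x = neg (psdo_mult P Q) n x"
    by (simp add: neg_def mult_Sum_any[OF a])
qed

lemma mult_neg_right: "ordle P N \<Longrightarrow> ordle Q M \<Longrightarrow> sm Q \<Longrightarrow> psdo_mult P (neg Q) = neg (psdo_mult P Q)"
proof (intro ext)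
  fix n x assume a: "ordle P N" "ordle Q M" "sm Q"
  have o: "ordle (neg Q) M" using a(2) by (auto simp: ordle_def neg_def)
  have d: "(deriv^^k) (neg Q j) = (\<lambda>x. - (deriv^^k) (Q j) x)" for k j
    using smooth_minus(2)[of "Q j" k] a(3) by (simp add: neg_def sm_def)
  have "psdo_mult P (neg Q) n x = Sum_any (\<lambda>z. - mt P Q n x z)"
    unfolding mult_Sum_any[OF a(1) o] by (rule Sum_any.cong) (auto simp: mt_def d split: prod.splits)
  also have "\<dots> = - Sum_any (mt P Q n x)"
    using Sum_any_rdistrib[OF mt_fin[OF a(1,2)], of "-1" n x] by simp
  finally show "psdo_mult P (neg Q) n x = neg (psdo_mult P Q) n x"
    by (simp add: neg_def mult_Sum_any[OF a(1,2)])
qed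

lemma neg_neg[simp]: "neg (neg P) = P" by (simp add: neg_def)

lemma is_psdo_neg: "is_psdo P \<Longrightarrow> is_psdo (neg P)"
  unfolding is_psdo_iff sm_def ordle_def neg_def
  by (auto intro: smooth_minus(1)) (metis neg_equal_0_iff_equal)

definition cst :: "psdo \<Rightarrow> bool" where "cst P \<longleftrightarrow> (\<forall>n. \<exists>c. P n = (\<lambda>_. c))"

lemma cst_dk: "cst P \<Longrightarrow> k > 0 \<Longrightarrow> (deriv^^k) (P n) = (\<lambda>_. 0)"
proof -
  assume a: "cst P" "k > 0"
  obtain c where c: "P n = (\<lambda>_. c)" using a(1) unfolding cst_def by blast
  obtain j where "k = Suc j" using a(2) gr0_implies_Suc by blast
  then show ?thesis using c dk_const by metis
qed

lemma cst_deriv: "cst P \<Longrightarrow> deriv (P n) = (\<lambda>_. 0)"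
  using cst_dk[of P 1] by simp

lemma mult_cst:
  assumes "ordle P N" "ordle Q M" "cst Q"
  shows "psdo_mult P Q n x = Sum_any (\<lambda>i. P i x * Q (n - i) x)"
proof -
  have "psdo_mult P Q n x = Sum_any (mt P Q n x)" by (rule mult_Sum_any[OF assms(1,2)])
  also have "\<dots> = Sum_any (\<lambda>i. mt P Q n x (i,0))"
  proof (rule Sum_any_reindex[of "\<lambda>i. (i,0)", unfolded comp_def])
    show "inj (\<lambda>i. (i, 0::nat))" by (auto intro: injI)
    fix a assume nz: "mt P Q n x a \<noteq> 0"
    obtain i k where a: "a = (i,k)" by fastforce
    have "k = 0"
    proof (rule ccontr)
      assume "k \<noteq> 0"
      then have "(deriv^^k) (Q (n + int k - i)) = (\<lambda>_. 0)" using cst_dk[OF assms(3)] by simp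
      then show False using nz by (simp add: a mt_def)
    qed
    then show "a \<in> range (\<lambda>i. (i, 0))" using a by auto
  qed
  also have "\<dots> = Sum_any (\<lambda>i. P i x * Q (n - i) x)" by (simp add: mt_def)
  finally show ?thesis .
qed

lemma adj_cst:
  assumes "ordle P N" "cst P"
  shows "psdo_adj P n x = sg n * P n x"
proof -
  have "psdo_adj P n x = Sum_any (adt P n x)" by (rule adj_Sum_any[OF assms(1)])
  also have "\<dots> = sum (adt P n x) {0}"
    by (rule Sum_any_eq_sum) (auto simp: adt_def cst_dk[OF assms(2)])
  finally show ?thesis by (simp add: adt_def)
qed

lemma lead_mult:
  assumes "ordle P a" "ordle Q b"
  shows "psdo_mult P Q (a + b) x = P a x * Q b x"
proof -
  have "psdo_mult P Q (a + b) x = Sum_any (mt P Q (a+b) x)" by (rule mult_Sum_any[OF assms])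
  also have "\<dots> = sum (mt P Q (a+b) x) {(a,0)}"
  proof (rule Sum_any_eq_sum, simp)
    fix z :: "int \<times> nat" assume z: "z \<notin> {(a,0)}"
    obtain i k where zz: "z = (i,k)" by fastforce
    show "mt P Q (a+b) x z = 0"
    proof (rule ccontr)
      assume "mt P Q (a+b) x z \<noteq> 0"
      then have "P i x \<noteq> 0" "(deriv^^k) (Q (a + b + int k - i)) x \<noteq> 0" by (auto simp: mt_def zz)
      then have "i \<le> a" "a + b + int k - i \<le> b" using assms ordle_nz' ordle_dnz by blast+
      then show False using z zz by auto
    qed
  qed
  finally show ?thesis by (simp add: mt_def)
qed

lemma lead_adj:
  assumes "ordle P a"
  shows "psdo_adj P a x = sg a * P a x"
proof -
  have "psdo_adj P a x = Sum_any (adt P a x)" by (rule adj_Sum_any[OF assms])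
  also have "\<dots> = sum (adt P a x) {0}"
  proof (rule Sum_any_eq_sum, simp)
    fix k :: nat assume "k \<notin> {0}"
    then have "P (a + int k) = (\<lambda>_. 0)" using assms by (simp add: ordle_def)
    then show "adt P a x k = 0" by (simp add: adt_def)
  qed
  finally show ?thesis by (simp add: adt_def)
qed


lemma strong_rec:
  fixes G :: "(nat \<Rightarrow> 'a) \<Rightarrow> nat \<Rightarrow> 'a"
  assumes "\<And>f g m. (\<And>j. j < m \<Longrightarrow> f j = g j) \<Longrightarrow> G f m = G g m"
  shows "\<exists>f. \<forall>m. f m = G f m"
proof -
  define f where "f = wfrec less_than G"
  have "f m = G f m" for m
  proof -
    have "f m = G (cut f less_than m) m" unfolding f_def by (rule wfrec) simp
    also have "\<dots> = G f m" by (rule assms) (simp add: cut_apply)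
    finally show ?thesis .
  qed
  then show ?thesis by blast
qed

definition ext :: "(nat \<Rightarrow> real \<Rightarrow> real) \<Rightarrow> psdo" where
  "ext f j = (if j \<le> 0 then f (nat (-j)) else (\<lambda>_. 0))"

lemma ordle_ext: "ordle (ext f) 0" unfolding ordle_def ext_def by auto

lemma ext_nonpos: "j \<le> 0 \<Longrightarrow> ext f j = f (nat (-j))" by (simp add: ext_def)

lemma sm_ext: "(\<And>m. smooth (f m)) \<Longrightarrow> sm (ext f)" unfolding sm_def ext_def by auto

lemma ext_cong: "(\<And>j. j < m \<Longrightarrow> f j = g j) \<Longrightarrow> j < 0 \<Longrightarrow> nat (- (- int m + j)) < m \<or> - int m + j > 0 \<Longrightarrow> ext f (- int m + j) = ext g (- int m + j)"
  unfolding ext_def by auto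

lemma Sum_any_split:
  fixes h :: "'a \<Rightarrow> real"
  assumes "finite {z. h z \<noteq> 0}"
  shows "Sum_any h = Sum_any (\<lambda>z. if S z then h z else 0) + Sum_any (\<lambda>z. if S z then 0 else h z)"
proof -
  have f1: "finite {z. (if S z then h z else 0) \<noteq> 0}" by (rule finite_subset[OF _ assms]) auto
  have f2: "finite {z. (if S z then 0 else h z) \<noteq> 0}" by (rule finite_subset[OF _ assms]) auto
  show ?thesis unfolding Sum_any.distrib[OF f1 f2, symmetric] by (rule Sum_any.cong) simp
qed

definition Sinv :: "psdo \<Rightarrow> (nat \<Rightarrow> real \<Rightarrow> real) \<Rightarrow> int \<Rightarrow> real \<Rightarrow> real" where
  "Sinv P f n x = Sum_any (\<lambda>(i,k). if i \<noteq> 0 then cc i k * (P i x * (deriv^^k) (ext f (n + int k - i)) x) else 0)"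

lemma right_inverse:
  assumes P: "ordle P 0" "sm P" "P 0 = (\<lambda>_. 1)"
  shows "\<exists>V. ordle V 0 \<and> sm V \<and> V 0 = (\<lambda>_. 1) \<and> psdo_mult P V = dpow 0"
proof -
  define G where "G = (\<lambda>f m x. (if m = 0 then 1 else 0) - Sinv P f (- int m) x)"
  have "\<exists>f. \<forall>m. f m = G f m"
  proof (rule strong_rec)
    fix f g :: "nat \<Rightarrow> real \<Rightarrow> real" and m assume fg: "\<And>j. j < m \<Longrightarrow> f j = g j"
    have "Sinv P f (- int m) x = Sinv P g (- int m) x" for x
      unfolding Sinv_def
    proof (rule Sum_any.cong)
      fix z :: "int \<times> nat" obtain i k where z: "z = (i,k)" by fastforce
      show "(case z of (i, k) \<Rightarrow> if i \<noteq> 0 then cc i k * (P i x * (deriv ^^ k) (ext f (- int m + int k - i)) x) else 0) =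
            (case z of (i, k) \<Rightarrow> if i \<noteq> 0 then cc i k * (P i x * (deriv ^^ k) (ext g (- int m + int k - i)) x) else 0)"
      proof (cases "i > 0")
        case True then show ?thesis using P(1) by (simp add: z ordle_zero)
      next
        case False
        then have "ext f (- int m + int k - i) = ext g (- int m + int k - i)" if "i \<noteq> 0"
          using fg that unfolding ext_def by auto
        then show ?thesis by (simp add: z)
      qed
    qed
    then show "G f m = G g m" unfolding G_def by auto
  qed
  then obtain f where f: "\<And>m. f m = G f m" by blast
  define V where "V = ext f"
  have Sinv_zero: "Sinv P f n x = 0" if "n \<ge> 0" for n x
    unfolding Sinv_def
  proof (rule Sum_any.neutral[THEN subst[where P="\<lambda>t. Sum_any _ = t"]], rule Sum_any.cong)
    fix z :: "int \<times> nat" obtain i k where z: "z = (i,k)" by fastforce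
    show "(case z of (i, k) \<Rightarrow> if i \<noteq> 0 then cc i k * (P i x * (deriv ^^ k) (ext f (n + int k - i)) x) else 0) = 0"
    proof (cases "i > 0")
      case True then show ?thesis using P(1) by (simp add: z ordle_zero)
    next
      case False then show ?thesis using that by (simp add: z ext_def)
    qed
  qed
  have V0: "V 0 = (\<lambda>_. 1)"
    unfolding V_def ext_def using f[of 0] Sinv_zero[of 0] by (auto simp: G_def)
  have smf: "smooth (f m)" for m
  proof (induction m rule: less_induct)
    case (less m)
    define A where "A = {-int m..-1} \<times> {..m}"
    define Fz where "Fz = (\<lambda>z x. case z of (i,k) \<Rightarrow> if i \<noteq> 0 then cc i k * (P i x * (deriv^^k) (ext f (- int m + int k - i)) x) else 0)"
    have "Sinv P f (- int m) x = (\<Sum>z\<in>A. (case z of (i,k) \<Rightarrow> if i \<noteq> 0 then cc i k * (P i x * (deriv^^k) (ext f (- int m + int k - i)) x) else 0))" for x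
      unfolding Sinv_def
    proof (rule Sum_any_eq_sum, simp add: A_def)
      fix z :: "int \<times> nat" assume zA: "z \<notin> A"
      obtain i k where z: "z = (i,k)" by fastforce
      show "(case z of (i,k) \<Rightarrow> if i \<noteq> 0 then cc i k * (P i x * (deriv^^k) (ext f (- int m + int k - i)) x) else 0) = 0"
      proof (cases "i > 0")
        case True then show ?thesis using P(1) by (simp add: z ordle_zero)
      next
        case False then show ?thesis using zA by (auto simp: z ext_def A_def)
      qed
    qed
    then have e: "f m = (\<lambda>x. (\<lambda>_. if m = 0 then 1 else 0) x + - (\<Sum>z\<in>A. Fz z x))"
      using f[of m] by (auto simp: G_def Fz_def)
    have sz: "smooth (Fz z)" if "z \<in> A" for z
    proof -
      obtain i k where z: "z = (i,k)" by fastforce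
      have ik: "i \<le> -1" "int k \<le> int m" using that by (auto simp: z A_def)
      have se: "smooth (ext f (- int m + int k - i))"
      proof (cases "- int m + int k - i \<le> 0")
        case True
        then have "nat (- (- int m + int k - i)) < m" using ik by auto
        then show ?thesis using less True by (simp add: ext_def)
      qed (simp add: ext_def)
      have "smooth (\<lambda>x. cc i k * (P i x * (deriv^^k) (ext f (- int m + int k - i)) x))"
        using P(2) smooth_dk[OF se] unfolding sm_def by (intro smooth_cmult smooth_mult) auto
      then show ?thesis using ik by (simp add: z Fz_def)
    qed
    show ?case unfolding e
      by (intro smooth_add(1) smooth_minus(1) smooth_sum(1) sz smooth_const)
  qed
  have smV: "sm V" unfolding V_def by (rule sm_ext[OF smf])
  have PV: "psdo_mult P V = dpow 0"
  proof (intro ext)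
    fix n x
    show "psdo_mult P V n x = dpow 0 n x"
    proof (cases "n > 0")
      case True
      then show ?thesis using ordle_mult[OF P(1) ordle_ext[of f]] by (simp add: V_def ordle_zero dpow_def)
    next
      case False
      define m where "m = nat (- n)"
      have nm: "n = - int m" using False by (simp add: m_def)
      have "psdo_mult P V n x = Sum_any (mt P V n x)" by (rule mult_Sum_any[OF P(1) ordle_ext[of f, folded V_def]])
      also have "\<dots> = Sum_any (\<lambda>z. if fst z = 0 then mt P V n x z else 0) + Sum_any (\<lambda>z. if fst z = 0 then 0 else mt P V n x z)"
        by (rule Sum_any_split, rule mt_fin[OF P(1) ordle_ext[of f, folded V_def]])
      also have "Sum_any (\<lambda>z. if fst z = 0 then mt P V n x z else 0) = sum (\<lambda>z. if fst z = 0 then mt P V n x z else 0) {(0,0)}"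
        by (rule Sum_any_eq_sum) (auto simp: mt_def gbinomial_0_left split: if_splits)
      also have "Sum_any (\<lambda>z. if fst z = 0 then 0 else mt P V n x z) = Sinv P f n x"
        unfolding Sinv_def by (rule Sum_any.cong) (auto simp: mt_def V_def split: prod.splits)
      also have "Sinv P f n x = (if m = 0 then 1 else 0) - f m x" using f[of m] by (simp add: G_def nm)
      finally show ?thesis using P(3) by (simp add: mt_def V_def ext_nonpos nm dpow_def)
    qed
  qed
  show ?thesis using ordle_ext smV V0 PV unfolding V_def by blast
qed

lemma inverse:
  assumes P: "ordle P 0" "sm P" "P 0 = (\<lambda>_. 1)"
  shows "\<exists>V. ordle V 0 \<and> sm V \<and> V 0 = (\<lambda>_. 1) \<and> psdo_mult P V = dpow 0 \<and> psdo_mult V P = dpow 0"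
proof -
  obtain V where V: "ordle V 0" "sm V" "V 0 = (\<lambda>_. 1)" "psdo_mult P V = dpow 0"
    using right_inverse[OF P] by blast
  obtain V' where V': "ordle V' 0" "sm V'" "V' 0 = (\<lambda>_. 1)" "psdo_mult V V' = dpow 0"
    using right_inverse[OF V(1-3)] by blast
  have ps: "is_psdo P" "is_psdo V" "is_psdo V'" using P V V' unfolding is_psdo_iff by auto
  have "P = psdo_mult P (psdo_mult V V')" using V'(4) mult_one_right[OF ps(1)] by simp
  also have "\<dots> = psdo_mult (psdo_mult P V) V'" using assoc[OF ps] by simp
  also have "\<dots> = V'" using V(4) mult_one_left[OF ps(3)] by simp
  finally have "P = V'" .
  then show ?thesis using V V' by blast
qed


definition Sdr :: "psdo \<Rightarrow> (nat \<Rightarrow> real \<Rightarrow> real) \<Rightarrow> int \<Rightarrow> real \<Rightarrow> real" where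
  "Sdr L f n x = Sum_any (\<lambda>(i,k). if i \<le> -1 then cc i k * (L i x * (deriv^^k) (ext f (n + int k - i)) x) else 0)"

lemma Sdr_zero: "n \<ge> 0 \<Longrightarrow> Sdr L f n x = 0"
  unfolding Sdr_def
  by (rule Sum_any.neutral[THEN subst[where P="\<lambda>t. Sum_any _ = t"]], rule Sum_any.cong) (auto simp: ext_def)

lemma Sdr_cong:
  assumes "\<And>j. j < m \<Longrightarrow> f j = g j"
  shows "Sdr L f (- int m) x = Sdr L g (- int m) x"
  unfolding Sdr_def
proof (rule Sum_any.cong)
  fix z :: "int \<times> nat" obtain i k where z: "z = (i,k)" by fastforce
  have "ext f (- int m + int k - i) = ext g (- int m + int k - i)" if "i \<le> -1"
    using assms that unfolding ext_def by auto
  then show "(case z of (i, k) \<Rightarrow> if i \<le> -1 then cc i k * (L i x * (deriv ^^ k) (ext f (- int m + int k - i)) x) else 0) =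
        (case z of (i, k) \<Rightarrow> if i \<le> -1 then cc i k * (L i x * (deriv ^^ k) (ext g (- int m + int k - i)) x) else 0)"
    by (simp add: z)
qed

lemma Sdr_smooth:
  assumes L: "sm L" and f: "\<And>j. j < m \<Longrightarrow> smooth (f j)"
  shows "smooth (\<lambda>x. Sdr L f (- int m) x)"
proof -
  define A where "A = {-int m..-1} \<times> {..m}"
  define Fz where "Fz = (\<lambda>z x. case z of (i,k) \<Rightarrow> if i \<le> -1 then cc i k * (L i x * (deriv^^k) (ext f (- int m + int k - i)) x) else 0)"
  have "Sdr L f (- int m) x = (\<Sum>z\<in>A. Fz z x)" for x
    unfolding Sdr_def Fz_def
  proof (rule Sum_any_eq_sum, simp add: A_def)
    fix z :: "int \<times> nat" assume zA: "z \<notin> A"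
    obtain i k where z: "z = (i,k)" by fastforce
    show "(case z of (i,k) \<Rightarrow> if i \<le> -1 then cc i k * (L i x * (deriv^^k) (ext f (- int m + int k - i)) x) else 0) = 0"
      using zA by (auto simp: z ext_def A_def)
  qed
  then have e: "(\<lambda>x. Sdr L f (- int m) x) = (\<lambda>x. \<Sum>z\<in>A. Fz z x)" by auto
  have sz: "smooth (Fz z)" if "z \<in> A" for z
  proof -
    obtain i k where z: "z = (i,k)" by fastforce
    have ik: "i \<le> -1" "int k \<le> int m" using that by (auto simp: z A_def)
    have se: "smooth (ext f (- int m + int k - i))"
    proof (cases "- int m + int k - i \<le> 0")
      case True
      then have "nat (- (- int m + int k - i)) < m" using ik by auto
      then show ?thesis using f True by (simp add: ext_def)
    qed (simp add: ext_def)
    have "smooth (\<lambda>x. cc i k * (L i x * (deriv^^k) (ext f (- int m + int k - i)) x))"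
      using L smooth_dk[OF se] unfolding sm_def by (intro smooth_cmult smooth_mult) auto
    then show ?thesis using ik by (simp add: z Fz_def)
  qed
  show ?thesis unfolding e by (intro smooth_sum(1) sz)
qed

lemma dressing:
  assumes L: "ordle L 1" "sm L" "L 1 = (\<lambda>_. 1)" "L 0 = (\<lambda>_. 0)"
  shows "\<exists>W. ordle W 0 \<and> sm W \<and> W 0 = (\<lambda>_. 1) \<and> psdo_mult L W = psdo_mult W (dpow 1)"
proof -
  define G where "G = (\<lambda>f m. if m = 0 then (\<lambda>_. 1) else prim (\<lambda>x. - Sdr L f (- int m) x))"
  have "\<exists>f. \<forall>m. f m = G f m"
  proof (rule strong_rec)
    fix f g :: "nat \<Rightarrow> real \<Rightarrow> real" and m assume fg: "\<And>j. j < m \<Longrightarrow> f j = g j"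
    then show "G f m = G g m" unfolding G_def using Sdr_cong[OF fg] by presburger
  qed
  then obtain f where f: "\<And>m. f m = G f m" by blast
  define W where "W = ext f"
  have smf: "smooth (f m)" for m
  proof (induction m rule: less_induct)
    case (less m)
    show ?case
    proof (cases "m = 0")
      case True then show ?thesis using f[of m] by (simp add: G_def)
    next
      case False
      have "smooth (\<lambda>x. - Sdr L f (- int m) x)" by (intro smooth_minus(1) Sdr_smooth L(2) less)
      then show ?thesis using f[of m] False prim(2) by (simp add: G_def)
    qed
  qed
  have smW: "sm W" unfolding W_def by (rule sm_ext[OF smf])
  have W0: "W 0 = (\<lambda>_. 1)" using f[of 0] by (simp add: W_def ext_def G_def)
  have dW: "deriv (W n) x = - Sdr L f n x" for n x
  proof (cases "n \<ge> 0")
    case True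
    then have "W n = (\<lambda>_. if n = 0 then 1 else 0)" using W0 by (auto simp: W_def ext_def)
    then show ?thesis using Sdr_zero[OF True] by (simp add: deriv_eqI)
  next
    case False
    define m where "m = nat (- n)"
    have nm: "n = - int m" "m \<noteq> 0" using False by (auto simp: m_def)
    have "W n = prim (\<lambda>x. - Sdr L f (- int m) x)" using f[of m] nm by (simp add: W_def ext_def G_def)
    moreover have "smooth (\<lambda>x. - Sdr L f (- int m) x)" by (intro smooth_minus(1) Sdr_smooth L(2) smf)
    ultimately show ?thesis using prim(1) nm by simp
  qed
  have c: "cc 1 k = 0" if "k \<ge> 2" for k
  proof -
    have "(1::real) gchoose k = of_nat (1 choose k)" by (simp add: binomial_gbinomial)
    then show ?thesis using that by simp
  qed
  have LW: "psdo_mult L W = psdo_mult W (dpow 1)"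
  proof (intro ext)
    fix n x
    have oW: "ordle W 0" unfolding W_def by (rule ordle_ext)
    have "psdo_mult L W n x = Sum_any (mt L W n x)" by (rule mult_Sum_any[OF L(1) oW])
    also have "\<dots> = Sum_any (\<lambda>z. if fst z = 1 then mt L W n x z else 0) + Sum_any (\<lambda>z. if fst z = 1 then 0 else mt L W n x z)"
      by (rule Sum_any_split, rule mt_fin[OF L(1) oW])
    also have "Sum_any (\<lambda>z. if fst z = 1 then mt L W n x z else 0) = sum (\<lambda>z. if fst z = 1 then mt L W n x z else 0) {(1,0),(1,1)}"
    proof (rule Sum_any_eq_sum, simp)
      fix z :: "int \<times> nat" assume z: "z \<notin> {(1,0),(1,1)}"
      obtain i k where zz: "z = (i,k)" by fastforce
      show "(if fst z = 1 then mt L W n x z else 0) = 0"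
        using z c[of k] by (auto simp: zz mt_def)
    qed
    also have "\<dots> = W (n - 1) x + deriv (W n) x" using L(3) by (simp add: mt_def)
    also have "Sum_any (\<lambda>z. if fst z = 1 then 0 else mt L W n x z) = Sdr L f n x"
      unfolding Sdr_def
    proof (rule Sum_any.cong)
      fix z :: "int \<times> nat" obtain i k where zz: "z = (i,k)" by fastforce
      show "(if fst z = 1 then 0 else mt L W n x z) =
          (case z of (i, k) \<Rightarrow> if i \<le> -1 then cc i k * (L i x * (deriv ^^ k) (ext f (n + int k - i)) x) else 0)"
      proof (cases "i \<le> -1")
        case True then show ?thesis by (simp add: zz mt_def W_def)
      next
        case False
        then have "i = 0 \<or> i = 1 \<or> i > 1" by auto
        then show ?thesis using L(1) L(4) False by (auto simp: zz mt_def ordle_zero)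
      qed
    qed
    finally show "psdo_mult L W n x = psdo_mult W (dpow 1) n x"
      using dW[of n x] by (simp add: mult_dpow_right[OF oW])
  qed
  show ?thesis using ordle_ext smW W0 LW unfolding W_def by blast
qed


lemma sum_split_ends:
  fixes f :: "nat \<Rightarrow> real"
  assumes "m \<ge> 1"
  shows "(\<Sum>a\<le>m. f a) = f 0 + f m + (\<Sum>a\<in>{1..<m}. f a)"
proof -
  have e: "{..m} = insert 0 (insert m {1..<m})" using assms by auto
  show ?thesis unfolding e using assms by (subst sum.insert) (auto simp: sum.insert)
qed

lemma sqrt_seq:
  fixes \<beta> :: "nat \<Rightarrow> real"
  assumes b0: "\<beta> 0 = 1" and bodd: "\<And>m. odd m \<Longrightarrow> \<beta> m = 0"
  shows "\<exists>c. c 0 = 1 \<and> (\<forall>m. (\<Sum>a\<le>m. (-1)^a * c a * c (m - a)) = \<beta> m)"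
proof -
  define G where "G = (\<lambda>(c::nat \<Rightarrow> real) m. if m = 0 then 1 else if odd m then 0 else
        (\<beta> m - (\<Sum>a\<in>{1..<m}. (-1)^a * c a * c (m - a))) / 2)"
  have "\<exists>c. \<forall>m. c m = G c m"
  proof (rule strong_rec)
    fix f g :: "nat \<Rightarrow> real" and m assume fg: "\<And>j. j < m \<Longrightarrow> f j = g j"
    have "(\<Sum>a\<in>{1..<m}. (-1)^a * f a * f (m - a)) = (\<Sum>a\<in>{1..<m}. (-1)^a * g a * g (m - a))"
      by (rule sum.cong) (auto simp: fg)
    then show "G f m = G g m" unfolding G_def by simp
  qed
  then obtain c where c: "\<And>m. c m = G c m" by blast
  have c0: "c 0 = 1" using c[of 0] by (simp add: G_def)
  have codd: "c m = 0" if "odd m" for m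
  proof -
    have "m \<noteq> 0" using that by (metis even_zero)
    then show ?thesis using c[of m] that by (simp add: G_def)
  qed
  have "(\<Sum>a\<le>m. (-1)^a * c a * c (m - a)) = \<beta> m" for m
  proof (cases "m = 0")
    case True then show ?thesis using c0 b0 by simp
  next
    case False
    show ?thesis
    proof (cases "odd m")
      case True
      have "(-1)^a * c a * c (m - a) = 0" if "a \<le> m" for a
      proof (cases "odd a")
        case True then show ?thesis by (simp add: codd)
      next
        case False
        then have "odd (m - a)" using \<open>odd m\<close> that by simp
        then show ?thesis by (simp add: codd)
      qed
      then have "(\<Sum>a\<le>m. (-1)^a * c a * c (m - a)) = (\<Sum>a\<le>m. 0)" by (intro sum.cong) auto
      then show ?thesis using bodd[OF True] by simp
    next
      case ev: False
      have "(\<Sum>a\<le>m. (-1)^a * c a * c (m - a)) = 2 * c m + (\<Sum>a\<in>{1..<m}. (-1)^a * c a * c (m - a))"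
        using sum_split_ends[of m "\<lambda>a. (-1)^a * c a * c (m - a)"] False ev c0 by simp
      also have "c m = (\<beta> m - (\<Sum>a\<in>{1..<m}. (-1)^a * c a * c (m - a))) / 2"
        using c[of m] False ev by (simp add: G_def)
      finally show ?thesis by (simp add: field_simps)
    qed
  qed
  then show ?thesis using c0 by blast
qed

lemma sqrt_op:
  assumes B: "ordle B 1" "cst B" "B 1 = (\<lambda>_. 1)" "\<And>n. even n \<Longrightarrow> B n = (\<lambda>_. 0)"
  shows "\<exists>C. ordle C 0 \<and> sm C \<and> cst C \<and> C 0 = (\<lambda>_. 1) \<and>
           psdo_mult (psdo_adj C) (psdo_mult (dpow 1) C) = B"
proof -
  define \<beta> where "\<beta> = (\<lambda>m::nat. B (1 - int m) 0)"
  have b0: "\<beta> 0 = 1" using B(3) by (simp add: \<beta>_def)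
  have bodd: "\<beta> m = 0" if "odd m" for m
  proof -
    have "even (1 - int m)" using that by simp
    then show ?thesis using B(4) by (simp add: \<beta>_def)
  qed
  obtain c where c0: "c 0 = 1" and cid: "\<And>m. (\<Sum>a\<le>m. (-1)^a * c a * c (m - a)) = \<beta> m"
    using sqrt_seq[of \<beta>, OF b0 bodd] by blast
  define C where "C = ext (\<lambda>m _. c m)"
  have oC: "ordle C 0" unfolding C_def by (rule ordle_ext)
  have cC: "cst C" unfolding C_def cst_def ext_def by auto
  have sC: "sm C" unfolding C_def by (rule sm_ext) simp
  have C0: "C 0 = (\<lambda>_. 1)" using c0 by (simp add: C_def ext_def)
  define D where "D = psdo_mult (dpow 1) C"
  have D: "D n x = C (n - 1) x" for n x
    unfolding D_def mult_dpow1_left[OF oC] using cst_deriv[OF cC] by simp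
  have oD: "ordle D 1" unfolding D_def using ordle_mult[OF ordle_dpow oC] by simp
  have cD: "cst D" unfolding cst_def
  proof
    fix n
    obtain c' where "C (n - 1) = (\<lambda>_. c')" using cC unfolding cst_def by blast
    then have "D n = (\<lambda>_. c')" using D by (auto simp: fun_eq_iff)
    then show "\<exists>c. D n = (\<lambda>_. c)" by blast
  qed
  have oA: "ordle (psdo_adj C) 0" by (rule ordle_adj[OF oC])
  have A: "psdo_adj C n x = sg n * C n x" for n x by (rule adj_cst[OF oC cC])
  have "psdo_mult (psdo_adj C) D = B"
  proof (intro ext)
    fix n x
    show "psdo_mult (psdo_adj C) D n x = B n x"
    proof (cases "n > 1")
      case True
      then show ?thesis using ordle_mult[OF oA oD] B(1) by (simp add: ordle_zero)
    next
      case False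
      define m where "m = nat (1 - n)"
      have nm: "n = 1 - int m" using False by (simp add: m_def)
      have "psdo_mult (psdo_adj C) D n x = Sum_any (\<lambda>i. sg i * C i x * C (n - i - 1) x)"
        unfolding mult_cst[OF oA oD cD] A D by (simp add: algebra_simps)
      also have "\<dots> = Sum_any (\<lambda>a::nat. sg (- int a) * C (- int a) x * C (n - (- int a) - 1) x)"
      proof (rule Sum_any_reindex[of "\<lambda>a::nat. - int a", unfolded comp_def])
        show "inj (\<lambda>a::nat. - int a)" by (auto intro: injI)
        fix i :: int assume nz: "sg i * C i x * C (n - i - 1) x \<noteq> 0"
        then have "i \<le> 0" using ordle_nz'[OF oC] by auto
        then have "i = - int (nat (- i))" by simp
        then show "i \<in> range (\<lambda>a::nat. - int a)" by blast
      qed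
      also have "\<dots> = (\<Sum>a\<le>m. sg (- int a) * C (- int a) x * C (n - (- int a) - 1) x)"
      proof (rule Sum_any_eq_sum, simp)
        fix a assume "a \<notin> {..m}"
        then have "n - (- int a) - 1 > 0" using nm by auto
        then show "sg (- int a) * C (- int a) x * C (n - (- int a) - 1) x = 0"
          using oC by (simp add: ordle_zero)
      qed
      also have "\<dots> = (\<Sum>a\<le>m. (-1)^a * c a * c (m - a))"
      proof (rule sum.cong[OF refl])
        fix a assume "a \<in> {..m}"
        then have am: "a \<le> m" by simp
        have "n - (- int a) - 1 = - int (m - a)" using nm am by simp
        then show "sg (- int a) * C (- int a) x * C (n - (- int a) - 1) x = (-1)^a * c a * c (m - a)"
          by (simp add: C_def ext_def power_int_minus_one_minus)
      qed
      also have "\<dots> = B n x"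
      proof -
        obtain b where "B n = (\<lambda>_. b)" using B(2) unfolding cst_def by blast
        then show ?thesis using cid[of m] unfolding \<beta>_def nm by simp
      qed
      finally show ?thesis .
    qed
  qed
  then show ?thesis using oC sC cC C0 unfolding D_def by blast
qed


notation psdo_mult (infixl "\<odot>" 70)

lemma sg_even: "even n \<Longrightarrow> sg n = 1"
proof (cases "n \<ge> 0")
  case True
  assume "even n"
  then have "even (nat n)" using True by (simp add: even_nat_iff)
  moreover have "n = int (nat n)" using True by simp
  ultimately show ?thesis by (metis sg_nat neg_one_even_power)
next
  case False
  assume "even n"
  then have "even (nat (-n))" using False by (simp add: even_nat_iff)
  moreover have "-n = int (nat (-n))" using False by simp
  ultimately have "sg (-n) = 1" by (metis sg_nat neg_one_even_power)
  then show ?thesis by (simp add: power_int_minus_one_minus)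
qed

lemma assoc_simp: "is_psdo P \<Longrightarrow> is_psdo Q \<Longrightarrow> is_psdo R \<Longrightarrow> (P \<odot> Q) \<odot> R = P \<odot> (Q \<odot> R)"
  by (rule assoc)

lemma adj_one: "psdo_adj (dpow 0) = dpow 0"
  unfolding adj_dpow by simp

lemma adj_D1: "psdo_adj (dpow 1) = neg (dpow 1)"
  unfolding adj_dpow neg_def by simp

lemma dpow_left: "is_psdo P \<Longrightarrow> dpow m \<odot> (dpow k \<odot> P) = dpow (m + k) \<odot> P"
  using assoc[OF is_psdo_dpow is_psdo_dpow, of P m k] dpow_dpow by simp

theorem mainTheorem14:
  fixes u :: "nat \<Rightarrow> real \<Rightarrow> real"
  assumes smooth_u: "\<forall>i\<ge>2. smooth (u i)"
    and adj: "psdo_adj (lax_op u)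
              = (\<lambda>n x. - psdo_mult (dpow 1) (psdo_mult (lax_op u) (dpow (-1))) n x)"
  shows "\<exists>W Winv. is_psdo W \<and> is_psdo Winv \<and> W 0 = (\<lambda>_. 1) \<and> (\<forall>j>0. W j = (\<lambda>_. 0))
           \<and> psdo_mult W Winv = dpow 0 \<and> psdo_mult Winv W = dpow 0
           \<and> lax_op u = psdo_mult (psdo_mult W (dpow 1)) Winv
           \<and> psdo_mult (psdo_mult W (dpow (-1))) (psdo_adj W) = dpow (-1)"
proof -
  define L where "L = lax_op u"
  define D1 where "D1 = dpow 1"
  define Dm where "Dm = dpow (-1)"
  define I where "I = dpow 0"
  have oL: "ordle L 1" unfolding L_def lax_op_def ordle_def by auto
  have sL: "sm L" unfolding L_def lax_op_def sm_def using smooth_u by auto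
  have L1: "L 1 = (\<lambda>_. 1)" and L0: "L 0 = (\<lambda>_. 0)" unfolding L_def lax_op_def by auto
  have pL: "is_psdo L" using oL sL unfolding is_psdo_iff by blast
  have pD: "is_psdo D1" "is_psdo Dm" "is_psdo I" unfolding D1_def Dm_def I_def by (auto intro: is_psdo_dpow)
  obtain W0 where W0: "ordle W0 0" "sm W0" "W0 0 = (\<lambda>_. 1)" and LW: "L \<odot> W0 = W0 \<odot> D1"
    using dressing[OF oL sL L1 L0] unfolding D1_def by blast
  obtain V0 where V0: "ordle V0 0" "sm V0" "V0 0 = (\<lambda>_. 1)" and WV: "W0 \<odot> V0 = I" and VW: "V0 \<odot> W0 = I"
    using inverse[OF W0] unfolding I_def by blast
  have pW0: "is_psdo W0" and pV0: "is_psdo V0" using W0 V0 unfolding is_psdo_iff by auto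
  define A where "A = psdo_adj W0"
  have pA: "is_psdo A" unfolding A_def by (rule is_psdo_adj[OF pW0])
  have pAV: "is_psdo (psdo_adj V0)" by (rule is_psdo_adj[OF pV0])
  note ps = pL pD pW0 pV0 pA pAV is_psdo_mult is_psdo_adj is_psdo_neg
  have oneL: "I \<odot> P = P" if "is_psdo P" for P using mult_one_left[OF that] by (simp add: I_def)
  have oneR: "P \<odot> I = P" if "is_psdo P" for P using mult_one_right[OF that] by (simp add: I_def)
  have Lform: "L = W0 \<odot> (D1 \<odot> V0)"
  proof -
    have "L = L \<odot> (W0 \<odot> V0)" using WV oneR[OF pL] by simp
    also have "\<dots> = (L \<odot> W0) \<odot> V0" using ps by (simp add: assoc_simp)
    also have "\<dots> = W0 \<odot> (D1 \<odot> V0)" using LW ps by (simp add: assoc_simp)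
    finally show ?thesis .
  qed
  have oAV: "ordle (psdo_adj V0) 0" by (rule ordle_adj[OF V0(1)])
  have adjL: "psdo_adj L = neg (psdo_adj V0 \<odot> (D1 \<odot> A))"
  proof -
    have "psdo_adj L = (psdo_adj V0 \<odot> psdo_adj D1) \<odot> A"
      unfolding Lform A_def using ps by (simp add: adj_mult)
    also have "\<dots> = (psdo_adj V0 \<odot> neg D1) \<odot> A" by (simp add: adj_D1 D1_def)
    also have "\<dots> = neg (psdo_adj V0 \<odot> D1) \<odot> A"
      using mult_neg_right[OF oAV ordle_dpow sm_dpow] by (simp add: D1_def)
    also have "\<dots> = neg ((psdo_adj V0 \<odot> D1) \<odot> A)"
      using mult_neg_left[OF ordle_mult[OF oAV ordle_dpow] ordle_adj[OF W0(1)]] by (simp add: D1_def A_def)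
    also have "\<dots> = neg (psdo_adj V0 \<odot> (D1 \<odot> A))" using ps by (simp add: assoc_simp)
    finally show ?thesis .
  qed
  have E: "psdo_adj V0 \<odot> (D1 \<odot> A) = D1 \<odot> (L \<odot> Dm)"
  proof -
    have "neg (psdo_adj V0 \<odot> (D1 \<odot> A)) = neg (D1 \<odot> (L \<odot> Dm))"
      using adjL adj unfolding L_def D1_def Dm_def neg_def by simp
    then show ?thesis by (metis neg_neg)
  qed
  have AV: "A \<odot> psdo_adj V0 = I"
    using adj_mult[OF pV0 pW0] VW adj_one unfolding A_def I_def by simp
  have DA: "D1 \<odot> A = A \<odot> (D1 \<odot> (L \<odot> Dm))"
  proof -
    have "D1 \<odot> A = (A \<odot> psdo_adj V0) \<odot> (D1 \<odot> A)" using AV oneL ps by simp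
    also have "\<dots> = A \<odot> (psdo_adj V0 \<odot> (D1 \<odot> A))" using ps by (simp add: assoc_simp)
    also have "\<dots> = A \<odot> (D1 \<odot> (L \<odot> Dm))" using E by simp
    finally show ?thesis .
  qed
  have DmD: "Dm \<odot> (D1 \<odot> P) = P" if "is_psdo P" for P
    using dpow_left[OF that, of "-1" 1] mult_one_left[OF that] unfolding Dm_def D1_def by simp
  have DDm: "D1 \<odot> (Dm \<odot> P) = P" if "is_psdo P" for P
    using dpow_left[OF that, of 1 "-1"] mult_one_left[OF that] unfolding Dm_def D1_def by simp
  define B where "B = A \<odot> (D1 \<odot> W0)"
  have pB: "is_psdo B" unfolding B_def using ps by simp
  have DB: "D1 \<odot> B = B \<odot> D1"
  proof -
    have "D1 \<odot> B = (D1 \<odot> A) \<odot> (D1 \<odot> W0)" unfolding B_def using ps by (simp add: assoc_simp)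
    also have "\<dots> = A \<odot> (D1 \<odot> (L \<odot> (Dm \<odot> (D1 \<odot> W0))))" unfolding DA using ps by (simp add: assoc_simp)
    also have "\<dots> = A \<odot> (D1 \<odot> (L \<odot> W0))" using DmD[OF pW0] by simp
    also have "\<dots> = B \<odot> D1" unfolding LW B_def using ps by (simp add: assoc_simp)
    finally show ?thesis .
  qed
  have oDW: "ordle (D1 \<odot> W0) 1" using ordle_mult[OF ordle_dpow W0(1)] by (simp add: D1_def)
  have oA: "ordle A 0" unfolding A_def by (rule ordle_adj[OF W0(1)])
  have oB: "ordle B 1" unfolding B_def using ordle_mult[OF oA oDW] by simp
  have sB: "sm B" using pB oB unfolding is_psdo_iff by blast
  have cB: "cst B" unfolding cst_def
  proof
    fix n
    have "deriv (B n) x = 0" for x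
    proof -
      have "(D1 \<odot> B) n x = (B \<odot> D1) n x" using DB by simp
      then show ?thesis unfolding D1_def mult_dpow1_left[OF oB] mult_dpow_right[OF oB] by simp
    qed
    then have "B n = (\<lambda>_. B n 0)" using sB deriv_zero_const unfolding sm_def by blast
    then show "\<exists>c. B n = (\<lambda>_. c)" by blast
  qed
  have B1: "B 1 = (\<lambda>_. 1)"
  proof
    fix x
    have "B (0 + 1) x = A 0 x * (D1 \<odot> W0) 1 x" unfolding B_def by (rule lead_mult[OF oA oDW])
    moreover have "(D1 \<odot> W0) (1 + 0) x = D1 1 x * W0 0 x" by (rule lead_mult[OF _ W0(1)]) (simp add: D1_def ordle_dpow)
    moreover have "A 0 x = sg 0 * W0 0 x" unfolding A_def by (rule lead_adj[OF W0(1)])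
    ultimately show "B 1 x = 1" using W0(3) by (simp add: D1_def dpow_def)
  qed
  have adjB: "psdo_adj B = neg B"
  proof -
    have "psdo_adj B = (psdo_adj W0 \<odot> psdo_adj D1) \<odot> psdo_adj A"
      unfolding B_def using ps by (simp add: adj_mult)
    also have "\<dots> = (A \<odot> neg D1) \<odot> W0" unfolding A_def adj_adj[OF pW0] by (simp add: adj_D1 D1_def)
    also have "\<dots> = neg (A \<odot> D1) \<odot> W0"
      using mult_neg_right[OF oA ordle_dpow sm_dpow] by (simp add: D1_def)
    also have "\<dots> = neg ((A \<odot> D1) \<odot> W0)"
      using mult_neg_left[OF ordle_mult[OF oA ordle_dpow] W0(1)] by (simp add: D1_def)
    also have "\<dots> = neg B" unfolding B_def using ps by (simp add: assoc_simp)
    finally show ?thesis .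
  qed
  have Beven: "B n = (\<lambda>_. 0)" if "even n" for n
  proof
    fix x
    have "psdo_adj B n x = sg n * B n x" by (rule adj_cst[OF oB cB])
    then have "- B n x = B n x" using adjB sg_even[OF that] by (simp add: neg_def)
    then show "B n x = 0" by simp
  qed
  obtain C where C: "ordle C 0" "sm C" "cst C" "C 0 = (\<lambda>_. 1)" and CB: "psdo_adj C \<odot> (D1 \<odot> C) = B"
    using sqrt_op[OF oB cB B1 Beven] unfolding D1_def by blast
  obtain Ci where Ci: "ordle Ci 0" "sm Ci" "Ci 0 = (\<lambda>_. 1)" and CCi: "C \<odot> Ci = I" and CiC: "Ci \<odot> C = I"
    using inverse[OF C(1,2,4)] unfolding I_def by blast
  have pC: "is_psdo C" and pCi: "is_psdo Ci" using C Ci unfolding is_psdo_iff by auto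
  note ps2 = ps pC pCi
  have CD: "C \<odot> D1 = D1 \<odot> C"
  proof (intro ext)
    fix n x show "(C \<odot> D1) n x = (D1 \<odot> C) n x"
      unfolding D1_def mult_dpow1_left[OF C(1)] mult_dpow_right[OF C(1)] using cst_deriv[OF C(3)] by simp
  qed
  have CiD: "Ci \<odot> D1 = D1 \<odot> Ci"
  proof -
    have "Ci \<odot> D1 = Ci \<odot> (D1 \<odot> (C \<odot> Ci))" using CCi oneR ps2 by simp
    also have "\<dots> = Ci \<odot> ((C \<odot> D1) \<odot> Ci)" unfolding CD using ps2 by (simp add: assoc_simp)
    also have "\<dots> = (Ci \<odot> C) \<odot> (D1 \<odot> Ci)" using ps2 by (simp add: assoc_simp)
    also have "\<dots> = D1 \<odot> Ci" using CiC oneL ps2 by simp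
    finally show ?thesis .
  qed
  define W where "W = W0 \<odot> Ci"
  define Winv where "Winv = C \<odot> V0"
  have pW: "is_psdo W" "is_psdo Winv" unfolding W_def Winv_def using ps2 by auto
  have oW: "ordle W 0" unfolding W_def using ordle_mult[OF W0(1) Ci(1)] by simp
  have Wz: "W 0 = (\<lambda>_. 1)"
  proof
    fix x show "W 0 x = 1" unfolding W_def using lead_mult[OF W0(1) Ci(1), of x] W0(3) Ci(3) by simp
  qed
  have Wpos: "\<forall>j>0. W j = (\<lambda>_. 0)" using oW unfolding ordle_def by auto
  have WWi: "W \<odot> Winv = I"
  proof -
    have "W \<odot> Winv = W0 \<odot> ((Ci \<odot> C) \<odot> V0)" unfolding W_def Winv_def using ps2 by (simp add: assoc_simp)
    also have "\<dots> = I" using CiC WV oneL ps2 by simp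
    finally show ?thesis .
  qed
  have WiW: "Winv \<odot> W = I"
  proof -
    have "Winv \<odot> W = C \<odot> ((V0 \<odot> W0) \<odot> Ci)" unfolding W_def Winv_def using ps2 by (simp add: assoc_simp)
    also have "\<dots> = I" using VW CCi oneL ps2 by simp
    finally show ?thesis .
  qed
  have Lrep: "L = (W \<odot> D1) \<odot> Winv"
  proof -
    have "(W \<odot> D1) \<odot> Winv = W0 \<odot> ((Ci \<odot> D1) \<odot> (C \<odot> V0))" unfolding W_def Winv_def using ps2 by (simp add: assoc_simp)
    also have "\<dots> = W0 \<odot> (D1 \<odot> ((Ci \<odot> C) \<odot> V0))" unfolding CiD using ps2 by (simp add: assoc_simp)
    also have "\<dots> = L" unfolding CiC Lform using oneL ps2 by simp
    finally show ?thesis by simp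
  qed
  define Z where "Z = psdo_adj W"
  define Y where "Y = psdo_adj Winv"
  have pZY: "is_psdo Z" "is_psdo Y" unfolding Z_def Y_def using pW by (auto intro: is_psdo_adj)
  have adjCiC: "psdo_adj Ci \<odot> psdo_adj C = I"
    using adj_mult[OF pC pCi] CCi adj_one unfolding I_def by simp
  have ZDW: "Z \<odot> (D1 \<odot> W) = D1"
  proof -
    have "Z = psdo_adj Ci \<odot> A" unfolding Z_def W_def A_def using adj_mult[OF pW0 pCi] by simp
    then have "Z \<odot> (D1 \<odot> W) = psdo_adj Ci \<odot> (A \<odot> (D1 \<odot> W0)) \<odot> Ci" unfolding W_def using ps2 by (simp add: assoc_simp)
    also have "\<dots> = (psdo_adj Ci \<odot> psdo_adj C) \<odot> D1 \<odot> (C \<odot> Ci)"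
      unfolding B_def[symmetric] CB[symmetric] using ps2 by (simp add: assoc_simp)
    also have "\<dots> = D1" unfolding adjCiC CCi using oneL oneR ps2 by simp
    finally show ?thesis .
  qed
  have YZ: "Y \<odot> Z = I" unfolding Y_def Z_def using adj_mult[OF pW] WWi adj_one unfolding I_def by simp
  have DW: "D1 \<odot> W = Y \<odot> D1"
  proof -
    have "D1 \<odot> W = (Y \<odot> Z) \<odot> (D1 \<odot> W)" using YZ oneL ps2 pW by simp
    also have "\<dots> = Y \<odot> D1" using ZDW pZY ps2 pW by (simp add: assoc_simp)
    finally show ?thesis .
  qed
  have WDm: "W \<odot> Dm = Dm \<odot> Y"
  proof -
    have "W \<odot> Dm = Dm \<odot> ((D1 \<odot> W) \<odot> Dm)" using DmD pW ps2 by (simp add: assoc_simp)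
    also have "\<dots> = Dm \<odot> (Y \<odot> (D1 \<odot> Dm))" unfolding DW using pZY ps2 by (simp add: assoc_simp)
    also have "\<dots> = Dm \<odot> Y" using dpow_dpow[of 1 "-1"] oneR pZY unfolding D1_def Dm_def I_def by simp
    finally show ?thesis .
  qed
  have final: "(W \<odot> Dm) \<odot> Z = Dm"
  proof -
    have "(W \<odot> Dm) \<odot> Z = Dm \<odot> (Y \<odot> Z)" unfolding WDm using pZY ps2 by (simp add: assoc_simp)
    then show ?thesis using YZ oneR ps2 by simp
  qed
  show ?thesis
    using pW Wz Wpos WWi WiW Lrep final
    unfolding L_def D1_def Dm_def I_def Z_def by blast
qed

end
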